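(* Let $0\le s\le d$, let $\Gamma$ be a graph with $v$ vertices that is generically locally rigid in $\mathbb E^d$ but not generically globally rigid in $\mathbb E^d$, and let $E$ be an irreducible component of the set $E^+$ of equivalent pairs of frameworks of $\Gamma$ in $\mathbb E^d$ with $\dim\pi_1(E)=vd$ and containing a non-congruent pair. Let $E_{\mathbb C}$ be the complexification of $E$. Then the complex Pogorelov map $P_{\mathbb C}$ restricts to an automorphism (algebraic bijection) of $E_{\mathbb C}$. Consequently, if $e\in E_{\mathbb C}$ is generic, then $P_{\mathbb C}(e)$ is generic in $E_{\mathbb C}$, and both components $\pi_1(P_{\mathbb C}(e))$ and $\pi_2(P_{\mathbb C}(e))$ are generic frameworks in $C_{\mathbb C^d}(\Gamma)$.
   Context: In $\mathbb C^d$ the squared length is $|w|^2=\sum_i w_i^2$ (no conjugation). $C_{\mathbb F^d}(\Gamma)$ denotes the space of frameworks (maps $\mathcal V\to\mathbb F^d$) of $\Gamma$. Frameworks are equivalent if squared edge lengths agree on all edges, congruent if on all vertex pairs. $E^+\subseteq C_{\mathbb E^d}(\Gamma)^2$ is the real algebraic set of equivalent pairs; $\pi_1,\pi_2$ are the projections to the factors. Generically locally rigid: generic frameworks have rigidity matrix of rank $vd-\binom{d+1}{2}$ (for $v\ge d+1$). The complexification of a real variety is the smallest complex variety containing it. The complex Pogorelov map is $P_{\mathbb C}=H^{-1}\circ S\circ H$ on $C_{\mathbb C^d}(\Gamma)^2$, where $H(\rho,\sigma)=((\rho+\sigma)/2,(\rho-\sigma)/2)$, $H^{-1}(a,f)=(a+f,a-f)$,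 and $S(a,f)=(\tilde a,\tilde f)$ with $\tilde a$ obtained from $a$ by multiplying the first $s$ coordinates of every vertex by $i$ and $\tilde f$ obtained from $f$ by multiplying the first $s$ coordinates of every vertex by $-i$. A point is generic in a variety defined over a number field $\mathbf k$ if it satisfies no polynomial equation over $\mathbf k$ not vanishing on the whole variety; a framework in $\mathbb C^d$ is generic if its coordinates satisfy no nonzero rational polynomial equation. *)

theory Defs
  imports Complex_Main "HOL-Computational_Algebra.Polynomial"
begin

inductive_set polys :: "'a::field_char_0 set \<Rightarrow> (('x \<Rightarrow> 'a) \<Rightarrow> 'a) set" for K where
  pconst: "c \<in> K \<Longrightarrow> (\<lambda>_. c) \<in> polys K"
| pvar: "(\<lambda>z. z x) \<in> polys K"
| padd: "f \<in> polys K \<Longrightarrow> g \<in> polys K \<Longrightarrow> (\<lambda>z. f z + g z) \<in> polys K"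
| pmul: "f \<in> polys K \<Longrightarrow> g \<in> polys K \<Longrightarrow> (\<lambda>z. f z * g z) \<in> polys K"

definition zero_set :: "(('x \<Rightarrow> 'a) \<Rightarrow> 'a::zero) set \<Rightarrow> ('x \<Rightarrow> 'a) set" where
  "zero_set P = {z. \<forall>f\<in>P. f z = 0}"

definition alg_set :: "'a::field_char_0 set \<Rightarrow> ('x \<Rightarrow> 'a) set \<Rightarrow> bool" where
  "alg_set K S \<longleftrightarrow> (\<exists>P. P \<subseteq> polys K \<and> S = zero_set P)"

definition irred_alg :: "'a::field_char_0 set \<Rightarrow> ('x \<Rightarrow> 'a) set \<Rightarrow> bool" where
  "irred_alg K S \<longleftrightarrow> alg_set K S \<and> S \<noteq> {} \<and>
     (\<forall>A B. alg_set K A \<longrightarrow> alg_set K B \<longrightarrow> S = A \<union> B \<longrightarrow> S = A \<or> S = B)"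

definition irred_component :: "'a::field_char_0 set \<Rightarrow> ('x \<Rightarrow> 'a) set \<Rightarrow> ('x \<Rightarrow> 'a) set \<Rightarrow> bool" where
  "irred_component K S T \<longleftrightarrow> irred_alg K S \<and> S \<subseteq> T \<and>
     (\<forall>S'. irred_alg K S' \<longrightarrow> S \<subseteq> S' \<longrightarrow> S' \<subseteq> T \<longrightarrow> S' = S)"

definition zar_closure :: "'a::field_char_0 set \<Rightarrow> ('x \<Rightarrow> 'a) set \<Rightarrow> ('x \<Rightarrow> 'a) set" where
  "zar_closure K S = \<Inter>{Z. alg_set K Z \<and> S \<subseteq> Z}"

definition alg_dim :: "'a::field_char_0 set \<Rightarrow> ('x \<Rightarrow> 'a) set \<Rightarrow> nat" where
  "alg_dim K S = Sup {n. \<exists>Z::nat \<Rightarrow> ('x \<Rightarrow> 'a) set.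
      (\<forall>i\<le>n. irred_alg K (Z i)) \<and> (\<forall>i<n. Z i \<subset> Z (Suc i)) \<and> Z n \<subseteq> S}"

definition set_dim :: "'a::field_char_0 set \<Rightarrow> ('x \<Rightarrow> 'a) set \<Rightarrow> nat" where
  "set_dim K S = alg_dim K (zar_closure K S)"

definition complexification :: "('x \<Rightarrow> real) set \<Rightarrow> ('x \<Rightarrow> complex) set" where
  "complexification S = zar_closure (UNIV::complex set) ((\<lambda>z x. complex_of_real (z x)) ` S)"

text \<open>A framework in F^d of a graph on vertex type 'v is a map 'v => nat => F whose
  coordinates i >= d vanish.\<close>
definition frameworks :: "nat \<Rightarrow> ('v \<Rightarrow> nat \<Rightarrow> 'a::zero) set" where
  "frameworks d = {p. \<forall>x i. d \<le> i \<longrightarrow> p x i = 0}"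

definition fc :: "('v \<Rightarrow> nat \<Rightarrow> 'a) \<Rightarrow> ('v \<times> nat \<Rightarrow> 'a)" where
  "fc p = (\<lambda>(x, i). p x i)"

definition pc :: "('v \<Rightarrow> nat \<Rightarrow> 'a) \<times> ('v \<Rightarrow> nat \<Rightarrow> 'a) \<Rightarrow> (bool \<times> 'v \<times> nat \<Rightarrow> 'a)" where
  "pc e = (\<lambda>(b, x, i). if b then fst e x i else snd e x i)"

text \<open>Squared length without conjugation.\<close>
definition sqd :: "nat \<Rightarrow> ('v \<Rightarrow> nat \<Rightarrow> 'a::comm_ring_1) \<Rightarrow> 'v \<Rightarrow> 'v \<Rightarrow> 'a" where
  "sqd d p a b = (\<Sum>i<d. (p a i - p b i)^2)"

definition equivalent :: "('v \<Rightarrow> 'v \<Rightarrow> bool) \<Rightarrow> nat \<Rightarrow> ('v \<Rightarrow> nat \<Rightarrow> 'a::comm_ring_1) \<Rightarrow> ('v \<Rightarrow> nat \<Rightarrow> 'a) \<Rightarrow> bool" where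
  "equivalent G d p q \<longleftrightarrow> (\<forall>a b. G a b \<longrightarrow> sqd d p a b = sqd d q a b)"

definition congruent :: "nat \<Rightarrow> ('v \<Rightarrow> nat \<Rightarrow> 'a::comm_ring_1) \<Rightarrow> ('v \<Rightarrow> nat \<Rightarrow> 'a) \<Rightarrow> bool" where
  "congruent d p q \<longleftrightarrow> (\<forall>a b. sqd d p a b = sqd d q a b)"

definition Eplus :: "('v \<Rightarrow> 'v \<Rightarrow> bool) \<Rightarrow> nat \<Rightarrow> (('v \<Rightarrow> nat \<Rightarrow> real) \<times> ('v \<Rightarrow> nat \<Rightarrow> real)) set" where
  "Eplus G d = {(p, q). p \<in> frameworks d \<and> q \<in> frameworks d \<and> equivalent G d p q}"

text \<open>Generic framework: coordinates satisfy no nonzero rational polynomial equation,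
  i.e. every rational polynomial vanishing at p vanishes on all of C_{F^d}.\<close>
definition generic_fw :: "nat \<Rightarrow> ('v \<Rightarrow> nat \<Rightarrow> 'a::field_char_0) \<Rightarrow> bool" where
  "generic_fw d p \<longleftrightarrow> p \<in> frameworks d \<and>
     (\<forall>f\<in>polys (\<rat>::'a set). f (fc p) = 0 \<longrightarrow> (\<forall>q\<in>frameworks d. f (fc q) = 0))"

text \<open>Rows of the rigidity matrix, indexed by oriented edges (a,b); the row of (b,a) is
  the negative of the row of (a,b), so this does not affect the rank.\<close>
definition rig_row :: "nat \<Rightarrow> ('v \<Rightarrow> nat \<Rightarrow> real) \<Rightarrow> 'v \<times> 'v \<Rightarrow> 'v \<Rightarrow> nat \<Rightarrow> real" where
  "rig_row d p e x i = (if i < d then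
      (if x = fst e then p (fst e) i - p (snd e) i
       else if x = snd e then p (snd e) i - p (fst e) i else 0) else 0)"

definition rows_indep :: "nat \<Rightarrow> ('v \<Rightarrow> nat \<Rightarrow> real) \<Rightarrow> ('v \<times> 'v) set \<Rightarrow> bool" where
  "rows_indep d p F \<longleftrightarrow> (\<forall>c. (\<forall>x i. (\<Sum>e\<in>F. c e * rig_row d p e x i) = 0) \<longrightarrow> (\<forall>e\<in>F. c e = 0))"

definition rig_rank :: "('v::finite \<Rightarrow> 'v \<Rightarrow> bool) \<Rightarrow> nat \<Rightarrow> ('v \<Rightarrow> nat \<Rightarrow> real) \<Rightarrow> nat" where
  "rig_rank G d p = Max (card ` {F. F \<subseteq> {(a, b). G a b} \<and> rows_indep d p F})"

definition max_rank :: "nat \<Rightarrow> nat \<Rightarrow> nat" where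
  "max_rank v d = (if d + 1 \<le> v then v * d - ((d + 1) choose 2) else v choose 2)"

definition gen_loc_rigid :: "('v::finite \<Rightarrow> 'v \<Rightarrow> bool) \<Rightarrow> nat \<Rightarrow> bool" where
  "gen_loc_rigid G d \<longleftrightarrow> (\<forall>p::'v \<Rightarrow> nat \<Rightarrow> real. generic_fw d p \<longrightarrow> rig_rank G d p = max_rank (card (UNIV :: 'v set)) d)"

definition gen_glob_rigid :: "('v::finite \<Rightarrow> 'v \<Rightarrow> bool) \<Rightarrow> nat \<Rightarrow> bool" where
  "gen_glob_rigid G d \<longleftrightarrow> (\<forall>p::'v \<Rightarrow> nat \<Rightarrow> real. generic_fw d p \<longrightarrow>
      (\<forall>q\<in>frameworks d. equivalent G d p q \<longrightarrow> congruent d p q))"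

definition pogorelov :: "nat \<Rightarrow> ('v \<Rightarrow> nat \<Rightarrow> complex) \<times> ('v \<Rightarrow> nat \<Rightarrow> complex)
    \<Rightarrow> ('v \<Rightarrow> nat \<Rightarrow> complex) \<times> ('v \<Rightarrow> nat \<Rightarrow> complex)" where
  "pogorelov s e =
    (let a = (\<lambda>x i. (fst e x i + snd e x i) / 2);
         f = (\<lambda>x i. (fst e x i - snd e x i) / 2);
         a' = (\<lambda>x i. if i < s then \<i> * a x i else a x i);
         f' = (\<lambda>x i. if i < s then - \<i> * f x i else f x i)
     in ((\<lambda>x i. a' x i + f' x i), (\<lambda>x i. a' x i - f' x i)))"

definition generic_in :: "(('v \<Rightarrow> nat \<Rightarrow> complex) \<times> ('v \<Rightarrow> nat \<Rightarrow> complex)) set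
    \<Rightarrow> ('v \<Rightarrow> nat \<Rightarrow> complex) \<times> ('v \<Rightarrow> nat \<Rightarrow> complex) \<Rightarrow> bool" where
  "generic_in V e \<longleftrightarrow> e \<in> V \<and>
     (\<forall>f\<in>polys {x::complex. algebraic x}. f (pc e) = 0 \<longrightarrow> (\<forall>z\<in>V. f (pc z) = 0))"

end

theory Submission
  imports Defs
begin

lemma polys_subst:
  assumes "f \<in> polys K" and "\<And>y. (\<lambda>z. \<sigma> z y) \<in> polys K"
  shows "(\<lambda>z. f (\<sigma> z)) \<in> polys K"
  using assms(1)
proof induction
  case (pconst c) then show ?case by (rule polys.pconst)
next
  case (pvar x) then show ?case using assms(2) by simp
next
  case (padd f g) then show ?case using polys.padd[OF padd.IH] by simp
next
  case (pmul f g) then show ?case using polys.pmul[OF pmul.IH] by simp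
qed

lemma polys_mono:
  assumes "f \<in> polys K" "K \<subseteq> L" shows "f \<in> polys L"
  using assms(1)
proof induction
  case (pconst c) then show ?case using assms(2) by (auto intro: polys.pconst)
qed (auto intro: polys.intros)

lemma pconstU: "(\<lambda>_. c) \<in> polys UNIV"
  by (rule polys.pconst) simp

lemma pvar': "(\<lambda>z. z x) \<in> polys K"
  by (rule polys.pvar)

lemma polys_smult:
  assumes "f \<in> polys UNIV" shows "(\<lambda>z. c * f z) \<in> polys UNIV"
  using polys.pmul[OF pconstU assms] by simp

lemma polys_add:
  assumes "f \<in> polys K" "g \<in> polys K" shows "(\<lambda>z. f z + g z) \<in> polys K"
  using polys.padd[OF assms] .

lemma polys_mul:
  assumes "f \<in> polys K" "g \<in> polys K" shows "(\<lambda>z. f z * g z) \<in> polys K"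
  using polys.pmul[OF assms] .

lemma polys_neg:
  assumes "f \<in> polys UNIV" shows "(\<lambda>z. - f z) \<in> polys UNIV"
  using polys_smult[OF assms, of "-1"] by simp

lemma polys_diff:
  assumes "f \<in> polys UNIV" "g \<in> polys UNIV" shows "(\<lambda>z. f z - g z) \<in> polys UNIV"
  using polys_add[OF assms(1) polys_neg[OF assms(2)]] by simp

lemma polys_power:
  assumes "f \<in> polys UNIV" shows "(\<lambda>z. f z ^ n) \<in> polys UNIV"
proof (induction n)
  case 0 then show ?case using pconstU[of 1] by simp
next
  case (Suc n) then show ?case using polys_mul[OF assms Suc] by simp
qed

lemma polys_sum:
  assumes "finite A" "\<And>a. a \<in> A \<Longrightarrow> F a \<in> polys UNIV"
  shows "(\<lambda>z. \<Sum>a\<in>A. F a z) \<in> polys UNIV"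
  using assms
proof (induction A rule: finite_induct)
  case empty then show ?case using pconstU[of 0] by simp
next
  case (insert a A)
  then have "(\<lambda>z. F a z + (\<Sum>a\<in>A. F a z)) \<in> polys UNIV"
    by (intro polys_add) auto
  then show ?case using insert by simp
qed

section \<open>Algebraic sets\<close>

lemma zero_set_iff: "z \<in> zero_set P \<longleftrightarrow> (\<forall>f\<in>P. f z = 0)"
  by (simp add: zero_set_def)

lemma alg_setI: "P \<subseteq> polys K \<Longrightarrow> alg_set K (zero_set P)"
  unfolding alg_set_def by blast

lemma alg_setE:
  assumes "alg_set K S" obtains P where "P \<subseteq> polys K" "S = zero_set P"
  using assms unfolding alg_set_def by blast

lemma alg_set_Int:
  assumes "alg_set K A" "alg_set K B" shows "alg_set K (A \<inter> B)"
proof -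
  obtain P where P: "P \<subseteq> polys K" "A = zero_set P" using assms(1) by (rule alg_setE)
  obtain Q where Q: "Q \<subseteq> polys K" "B = zero_set Q" using assms(2) by (rule alg_setE)
  have "A \<inter> B = zero_set (P \<union> Q)" using P Q by (auto simp: zero_set_def)
  then show ?thesis using P Q alg_setI[of "P \<union> Q" K] by auto
qed

lemma alg_set_Inter:
  fixes \<Z> :: "('x \<Rightarrow> 'a::field_char_0) set set"
  assumes "\<And>Z. Z \<in> \<Z> \<Longrightarrow> alg_set K Z" shows "alg_set K (\<Inter>\<Z>)"
proof -
  define PP where "PP Z = (SOME P. P \<subseteq> polys K \<and> Z = zero_set P)" for Z :: "('x \<Rightarrow> 'a) set"
  have PP: "PP Z \<subseteq> polys K \<and> Z = zero_set (PP Z)" if "Z \<in> \<Z>" for Z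
    unfolding PP_def using assms[OF that] unfolding alg_set_def by (rule someI_ex)
  have "\<Inter>\<Z> = zero_set (\<Union>Z\<in>\<Z>. PP Z)"
  proof (intro equalityI subsetI)
    fix z assume z: "z \<in> \<Inter>\<Z>"
    show "z \<in> zero_set (\<Union>Z\<in>\<Z>. PP Z)"
      unfolding zero_set_iff
    proof
      fix f assume "f \<in> (\<Union>Z\<in>\<Z>. PP Z)"
      then obtain Z where "Z \<in> \<Z>" "f \<in> PP Z" by auto
      then show "f z = 0" using PP[of Z] z by (auto simp: zero_set_def)
    qed
  next
    fix z assume z: "z \<in> zero_set (\<Union>Z\<in>\<Z>. PP Z)"
    show "z \<in> \<Inter>\<Z>"
    proof
      fix Z assume "Z \<in> \<Z>"
      then show "z \<in> Z" using PP[of Z] z by (auto simp: zero_set_def)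
    qed
  qed
  moreover have "(\<Union>Z\<in>\<Z>. PP Z) \<subseteq> polys K" using PP by auto
  ultimately show ?thesis by (simp add: alg_setI)
qed

lemma zar_closure_alg: "alg_set K (zar_closure K S)"
  unfolding zar_closure_def by (rule alg_set_Inter) auto

lemma zar_closure_sup: "S \<subseteq> zar_closure K S"
  unfolding zar_closure_def by auto

lemma zar_closure_least: "alg_set K Z \<Longrightarrow> S \<subseteq> Z \<Longrightarrow> zar_closure K S \<subseteq> Z"
  unfolding zar_closure_def by auto

lemma alg_set_preimage:
  assumes "alg_set K Z" "\<And>y. (\<lambda>z. \<sigma> z y) \<in> polys K"
  shows "alg_set K {z. \<sigma> z \<in> Z}"
proof -
  obtain P where P: "P \<subseteq> polys K" "Z = zero_set P" using assms(1) by (rule alg_setE)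
  have "{z. \<sigma> z \<in> Z} = zero_set ((\<lambda>f z. f (\<sigma> z)) ` P)"
    using P by (auto simp: zero_set_def)
  moreover have "(\<lambda>f z. f (\<sigma> z)) ` P \<subseteq> polys K"
    using P assms(2) polys_subst by blast
  ultimately show ?thesis by (simp add: alg_setI)
qed

lemma alg_set_vanish:
  assumes "alg_set K Z" "x \<notin> Z" obtains f where "f \<in> polys K" "\<forall>z\<in>Z. f z = 0" "f x \<noteq> 0"
proof -
  obtain P where P: "P \<subseteq> polys K" "Z = zero_set P" using assms(1) by (rule alg_setE)
  then show ?thesis using assms(2) that by (auto simp: zero_set_def)
qed

lemma alg_set_single: "f \<in> polys K \<Longrightarrow> alg_set K {z. f z = 0}"
  using alg_setI[of "{f}" K] by (simp add: zero_set_def)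

lemma irred_domain:
  assumes "irred_alg K Y" "a \<in> polys K" "b \<in> polys K" "\<forall>z\<in>Y. a z * b z = 0"
  shows "(\<forall>z\<in>Y. a z = 0) \<or> (\<forall>z\<in>Y. b z = 0)"
proof -
  have alg: "alg_set K Y" using assms(1) by (simp add: irred_alg_def)
  have "Y = (Y \<inter> {z. a z = 0}) \<union> (Y \<inter> {z. b z = 0})" using assms(4) by auto
  moreover have "alg_set K (Y \<inter> {z. a z = 0})" "alg_set K (Y \<inter> {z. b z = 0})"
    using alg alg_set_single assms(2,3) alg_set_Int by blast+
  ultimately have "Y = Y \<inter> {z. a z = 0} \<or> Y = Y \<inter> {z. b z = 0}"
    using assms(1) unfolding irred_alg_def by blast
  then show ?thesis by blast
qed


lemma poly_inf_zero:
  fixes q :: "'a::idom poly"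
  assumes "infinite S" "\<forall>x\<in>S. poly q x = 0" shows "q = 0"
proof (rule ccontr)
  assume "q \<noteq> 0"
  then have "finite {x. poly q x = 0}" by (rule poly_roots_finite)
  moreover have "S \<subseteq> {x. poly q x = 0}" using assms(2) by auto
  ultimately show False using assms(1) finite_subset by blast
qed

definition Mc :: "nat \<Rightarrow> 'a::field \<Rightarrow> (bool \<times> 'v \<times> nat \<Rightarrow> 'a) \<Rightarrow> (bool \<times> 'v \<times> nat \<Rightarrow> 'a)" where
  "Mc s c z = (\<lambda>(b,x,i). if i < s then
      (if b then ((c + inverse c)/2) * z (True,x,i) + ((c - inverse c)/2) * z (False,x,i)
       else ((c - inverse c)/2) * z (True,x,i) + ((c + inverse c)/2) * z (False,x,i))
     else z (b,x,i))"

lemma Mc_1: "Mc s (1::'a::field_char_0) z = z"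
  by (rule ext) (auto simp: Mc_def)

lemma laurent:
  fixes f :: "(bool \<times> 'v \<times> nat \<Rightarrow> 'a::field_char_0) \<Rightarrow> 'a"
  assumes "f \<in> polys K"
  shows "\<exists>N q. \<forall>c. c \<noteq> 0 \<longrightarrow> c ^ N * f (Mc s c z) = poly q c"
  using assms
proof induction
  case (pconst c)
  show ?case by (rule exI[of _ 0], rule exI[of _ "[:c:]"]) simp
next
  case (pvar y)
  obtain b x i where y: "y = (b,x,i)" by (cases y) auto
  show ?case
  proof (cases "i < s")
    case False
    show ?thesis by (rule exI[of _ 0], rule exI[of _ "[:z y:]"]) (simp add: Mc_def y False)
  next
    case True
    show ?thesis
    proof (cases b)
      case True
      show ?thesis
        apply (rule exI[of _ 1], rule exI[of _ "[:(z (True,x,i) - z (False,x,i))/2, 0, (z (True,x,i) + z (False,x,i))/2:]"])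
        using \<open>i < s\<close> True by (auto simp: Mc_def y field_simps)
    next
      case False
      show ?thesis
        apply (rule exI[of _ 1], rule exI[of _ "[:(z (False,x,i) - z (True,x,i))/2, 0, (z (True,x,i) + z (False,x,i))/2:]"])
        using \<open>i < s\<close> False by (auto simp: Mc_def y field_simps)
    qed
  qed
next
  case (padd f g)
  obtain N1 q1 where 1: "\<forall>c. c \<noteq> 0 \<longrightarrow> c ^ N1 * f (Mc s c z) = poly q1 c" using padd.IH(1) by blast
  obtain N2 q2 where 2: "\<forall>c. c \<noteq> 0 \<longrightarrow> c ^ N2 * g (Mc s c z) = poly q2 c" using padd.IH(2) by blast
  show ?case
  proof (rule exI[of _ "N1 + N2"], rule exI[of _ "monom 1 N2 * q1 + monom 1 N1 * q2"], intro allI impI)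
    fix c :: 'a assume c: "c \<noteq> 0"
    have "c ^ (N1 + N2) * (f (Mc s c z) + g (Mc s c z)) = c ^ N2 * (c ^ N1 * f (Mc s c z)) + c ^ N1 * (c ^ N2 * g (Mc s c z))"
      by (simp add: power_add algebra_simps)
    also have "\<dots> = poly (monom 1 N2 * q1 + monom 1 N1 * q2) c"
      using 1 2 c by (simp add: poly_monom)
    finally show "c ^ (N1 + N2) * (f (Mc s c z) + g (Mc s c z)) = poly (monom 1 N2 * q1 + monom 1 N1 * q2) c" .
  qed
next
  case (pmul f g)
  obtain N1 q1 where 1: "\<forall>c. c \<noteq> 0 \<longrightarrow> c ^ N1 * f (Mc s c z) = poly q1 c" using pmul.IH(1) by blast
  obtain N2 q2 where 2: "\<forall>c. c \<noteq> 0 \<longrightarrow> c ^ N2 * g (Mc s c z) = poly q2 c" using pmul.IH(2) by blast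
  show ?case
  proof (rule exI[of _ "N1 + N2"], rule exI[of _ "q1 * q2"], intro allI impI)
    fix c :: 'a assume c: "c \<noteq> 0"
    have "c ^ (N1 + N2) * (f (Mc s c z) * g (Mc s c z)) = (c ^ N1 * f (Mc s c z)) * (c ^ N2 * g (Mc s c z))"
      by (simp add: power_add algebra_simps)
    also have "\<dots> = poly (q1 * q2) c"
      using 1 2 c by simp
    finally show "c ^ (N1 + N2) * (f (Mc s c z) * g (Mc s c z)) = poly (q1 * q2) c" .
  qed
qed

lemma laurent_vanish:
  fixes f :: "(bool \<times> 'v \<times> nat \<Rightarrow> 'a::field_char_0) \<Rightarrow> 'a"
  assumes "f \<in> polys K" "infinite L" "0 \<notin> L" "\<forall>c\<in>L. f (Mc s c z) = 0" "c \<noteq> 0"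
  shows "f (Mc s c z) = 0"
proof -
  obtain N q where q: "\<forall>c. c \<noteq> 0 \<longrightarrow> c ^ N * f (Mc s c z) = poly q c"
    using laurent[OF assms(1)] by blast
  have "\<forall>x\<in>L. poly q x = 0" using q assms(3,4) by (metis mult_zero_right)
  then have "q = 0" using poly_inf_zero assms(2) by blast
  then have "c ^ N * f (Mc s c z) = 0" using q assms(5) by simp
  then show ?thesis using assms(5) by simp
qed

lemma Mc_polys:
  "(\<lambda>z. Mc s c z y) \<in> polys (UNIV::'a::field_char_0 set)"
proof -
  obtain b x i where y: "y = (b,x,i)" by (cases y) auto
  have A: "(\<lambda>z. a * z (True,x,i) + b' * z (False,x,i)) \<in> polys (UNIV::'a set)" for a b'
    by (intro polys_add polys_smult pvar')
  show ?thesis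
    using A[of "(c + inverse c)/2" "(c - inverse c)/2"] A[of "(c - inverse c)/2" "(c + inverse c)/2"]
    by (cases "i < s"; cases b) (auto simp: Mc_def y intro: pvar')
qed

lemma univ_decomp:
  fixes f :: "('x \<Rightarrow> 'a::field_char_0) \<Rightarrow> 'a"
  assumes "f \<in> polys UNIV"
  shows "\<exists>pz. (\<forall>z. f z = poly (pz z) (z y)) \<and> (\<forall>z t. pz (z(y:=t)) = pz z)
     \<and> (\<forall>j. (\<lambda>z. coeff (pz z) j) \<in> polys UNIV) \<and> (\<exists>m. \<forall>z. degree (pz z) \<le> m)"
  using assms
proof induction
  case (pconst c)
  show ?case
    by (rule exI[of _ "\<lambda>_. [:c:]"]) (auto intro: pconstU)
next
  case (pvar x)
  show ?case
  proof (cases "x = y")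
    case True
    have "(\<lambda>z. coeff [:0, 1:] j) \<in> polys (UNIV::'a set)" for j by (rule pconstU)
    then show ?thesis using True
      by (intro exI[of _ "\<lambda>_. [:0,1:]"]) auto
  next
    case False
    have "(\<lambda>z. coeff [:z x:] j) \<in> polys (UNIV::'a set)" for j
      by (cases j) (auto intro: pconstU pvar')
    then show ?thesis using False
      by (intro exI[of _ "\<lambda>z. [:z x:]"]) auto
  qed
next
  case (padd f g)
  obtain p1 m1 where 1: "\<forall>z. f z = poly (p1 z) (z y)" "\<forall>z t. p1 (z(y:=t)) = p1 z"
     "\<forall>j. (\<lambda>z. coeff (p1 z) j) \<in> polys UNIV" "\<forall>z. degree (p1 z) \<le> m1" using padd.IH(1) by blast
  obtain p2 m2 where 2: "\<forall>z. g z = poly (p2 z) (z y)" "\<forall>z t. p2 (z(y:=t)) = p2 z"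
     "\<forall>j. (\<lambda>z. coeff (p2 z) j) \<in> polys UNIV" "\<forall>z. degree (p2 z) \<le> m2" using padd.IH(2) by blast
  show ?case
  proof (rule exI[of _ "\<lambda>z. p1 z + p2 z"], intro conjI allI)
    show "\<exists>m. \<forall>z. degree (p1 z + p2 z) \<le> m"
      using 1(4) 2(4) by (intro exI[of _ "max m1 m2"]) (metis degree_add_le max.coboundedI1 max.coboundedI2)
    fix j show "(\<lambda>z. coeff (p1 z + p2 z) j) \<in> polys UNIV"
      using polys_add[OF 1(3)[rule_format, of j] 2(3)[rule_format, of j]] by simp
  next
    fix z :: "'x \<Rightarrow> 'a" and t
    show "p1 (z(y:=t)) + p2 (z(y:=t)) = p1 z + p2 z" using 1(2) 2(2) by metis
  qed (use 1 2 in simp_all)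
next
  case (pmul f g)
  obtain p1 m1 where 1: "\<forall>z. f z = poly (p1 z) (z y)" "\<forall>z t. p1 (z(y:=t)) = p1 z"
     "\<forall>j. (\<lambda>z. coeff (p1 z) j) \<in> polys UNIV" "\<forall>z. degree (p1 z) \<le> m1" using pmul.IH(1) by blast
  obtain p2 m2 where 2: "\<forall>z. g z = poly (p2 z) (z y)" "\<forall>z t. p2 (z(y:=t)) = p2 z"
     "\<forall>j. (\<lambda>z. coeff (p2 z) j) \<in> polys UNIV" "\<forall>z. degree (p2 z) \<le> m2" using pmul.IH(2) by blast
  show ?case
  proof (rule exI[of _ "\<lambda>z. p1 z * p2 z"], intro conjI allI)
    show "\<exists>m. \<forall>z. degree (p1 z * p2 z) \<le> m"
      using 1(4) 2(4) by (intro exI[of _ "m1 + m2"]) (meson degree_mult_le le_trans add_mono)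
    fix j show "(\<lambda>z. coeff (p1 z * p2 z) j) \<in> polys UNIV"
      unfolding coeff_mult
      by (intro polys_sum polys_mul) (use 1(3) 2(3) in auto)
  next
    fix z :: "'x \<Rightarrow> 'a" and t
    show "p1 (z(y:=t)) * p2 (z(y:=t)) = p1 z * p2 z" using 1(2) 2(2) by metis
  qed (use 1 2 in simp_all)
qed

lemma poly_le_sum:
  fixes p :: "'a::comm_semiring_1 poly"
  assumes "degree p \<le> m" shows "poly p x = (\<Sum>i\<le>m. coeff p i * x ^ i)"
proof -
  have "poly p x = (\<Sum>i\<le>degree p. coeff p i * x ^ i)" by (rule poly_altdef)
  also have "\<dots> = (\<Sum>i\<le>m. coeff p i * x ^ i)"
    using assms by (intro sum.mono_neutral_left) (auto simp: coeff_eq_0)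
  finally show ?thesis .
qed


section \<open>Transcendence-degree style dimension bound\<close>

definition dep_on :: "'x set \<Rightarrow> (('x \<Rightarrow> 'a) \<Rightarrow> 'b) \<Rightarrow> bool" where
  "dep_on U f \<longleftrightarrow> (\<forall>z z'. (\<forall>y\<in>U. z y = z' y) \<longrightarrow> f z = f z')"

definition Apoly :: "'x set \<Rightarrow> (('x \<Rightarrow> real) \<Rightarrow> real) set" where
  "Apoly U = {f \<in> polys UNIV. dep_on U f}"

definition indep :: "('x \<Rightarrow> real) set \<Rightarrow> 'x set \<Rightarrow> bool" where
  "indep Y U \<longleftrightarrow> (\<forall>f\<in>Apoly U. (\<forall>z\<in>Y. f z = 0) \<longrightarrow> (\<forall>z. f z = 0))"

definition alg_over :: "('x \<Rightarrow> real) set \<Rightarrow> 'x set \<Rightarrow> (('x \<Rightarrow> real) \<Rightarrow> real) \<Rightarrow> bool" where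
  "alg_over Y U h \<longleftrightarrow> (\<exists>N lam. (\<forall>t\<le>N. lam t \<in> Apoly U) \<and> (\<exists>t\<le>N. \<exists>z\<in>Y. lam t z \<noteq> 0)
      \<and> (\<forall>z\<in>Y. (\<Sum>t\<le>N. lam t z * h z ^ t) = 0))"

lemma Apoly_polys: "f \<in> Apoly U \<Longrightarrow> f \<in> polys UNIV"
  by (simp add: Apoly_def)

lemma Apoly_const: "(\<lambda>_. c) \<in> Apoly U"
  by (auto simp: Apoly_def dep_on_def pconstU)

lemma Apoly_add: "f \<in> Apoly U \<Longrightarrow> g \<in> Apoly U \<Longrightarrow> (\<lambda>z. f z + g z) \<in> Apoly U"
  unfolding Apoly_def dep_on_def by (auto intro: polys_add; metis)

lemma Apoly_mul: "f \<in> Apoly U \<Longrightarrow> g \<in> Apoly U \<Longrightarrow> (\<lambda>z. f z * g z) \<in> Apoly U"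
  unfolding Apoly_def dep_on_def by (auto intro: polys_mul; metis)

lemma Apoly_neg: "f \<in> Apoly U \<Longrightarrow> (\<lambda>z. - f z) \<in> Apoly U"
  unfolding Apoly_def dep_on_def by (auto intro: polys_neg)

lemma Apoly_diff: "f \<in> Apoly U \<Longrightarrow> g \<in> Apoly U \<Longrightarrow> (\<lambda>z. f z - g z) \<in> Apoly U"
  unfolding Apoly_def dep_on_def by (auto intro: polys_diff; metis)

lemma Apoly_power: "f \<in> Apoly U \<Longrightarrow> (\<lambda>z. f z ^ n) \<in> Apoly U"
  unfolding Apoly_def dep_on_def by (auto intro: polys_power; metis)

lemma Apoly_sum: "finite A \<Longrightarrow> (\<And>a. a \<in> A \<Longrightarrow> F a \<in> Apoly U) \<Longrightarrow> (\<lambda>z. \<Sum>a\<in>A. F a z) \<in> Apoly U"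
proof (induction A rule: finite_induct)
  case empty then show ?case using Apoly_const[of 0] by simp
next
  case (insert a A)
  then have "(\<lambda>z. F a z + (\<Sum>a\<in>A. F a z)) \<in> Apoly U" by (intro Apoly_add) auto
  then show ?case using insert by simp
qed

lemma Apoly_var: "y \<in> U \<Longrightarrow> (\<lambda>z. z y) \<in> Apoly U"
  unfolding Apoly_def dep_on_def by (auto intro: pvar')

lemma nonvan_mult:
  assumes "irred_alg UNIV Y" "a \<in> polys UNIV" "b \<in> polys UNIV"
    "\<exists>z\<in>Y. a z \<noteq> (0::real)" "\<exists>z\<in>Y. b z \<noteq> 0"
  shows "\<exists>z\<in>Y. a z * b z \<noteq> 0"
  using irred_domain[OF assms(1-3)] assms(4,5) by blast

lemma nonvan_power:
  assumes "irred_alg UNIV Y" "a \<in> polys UNIV" "\<exists>z\<in>Y. a z \<noteq> (0::real)"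
  shows "\<exists>z\<in>Y. a z ^ n \<noteq> 0"
  using assms(3) by auto

lemma alg_over_norm:
  assumes "alg_over Y U h"
  shows "\<exists>m lam. 0 < m \<and> (\<forall>t\<le>m. lam t \<in> Apoly U) \<and> (\<exists>z\<in>Y. lam m z \<noteq> 0)
     \<and> (\<forall>z\<in>Y. (\<Sum>t\<le>m. lam t z * h z ^ t) = 0)"
proof -
  obtain N lam where L: "\<forall>t\<le>N. lam t \<in> Apoly U" "\<exists>t\<le>N. \<exists>z\<in>Y. lam t z \<noteq> 0"
      "\<forall>z\<in>Y. (\<Sum>t\<le>N. lam t z * h z ^ t) = 0"
    using assms unfolding alg_over_def by blast
  define S where "S = {t. t \<le> N \<and> (\<exists>z\<in>Y. lam t z \<noteq> 0)}"
  have fS: "finite S" and neS: "S \<noteq> {}" using L(2) by (auto simp: S_def)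
  define m where "m = Max S"
  have mS: "m \<in> S" using fS neS by (simp add: m_def)
  have above: "\<forall>z\<in>Y. lam t z = 0" if "m < t" "t \<le> N" for t
  proof (rule ccontr)
    assume "\<not> (\<forall>z\<in>Y. lam t z = 0)"
    then have "t \<in> S" using that by (auto simp: S_def)
    then have "t \<le> m" using fS by (simp add: m_def)
    then show False using that by simp
  qed
  have mN: "m \<le> N" using mS by (simp add: S_def)
  have rel: "\<forall>z\<in>Y. (\<Sum>t\<le>m. lam t z * h z ^ t) = 0"
  proof
    fix z assume z: "z \<in> Y"
    have "(\<Sum>t\<le>N. lam t z * h z ^ t) = (\<Sum>t\<le>m. lam t z * h z ^ t)"
      using above z mN by (intro sum.mono_neutral_right) auto
    then show "(\<Sum>t\<le>m. lam t z * h z ^ t) = 0" using L(3) z by simp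
  qed
  have "0 < m"
  proof (rule ccontr)
    assume "\<not> 0 < m"
    then have "m = 0" by simp
    then show False using rel mS by (auto simp: S_def)
  qed
  then show ?thesis using rel mS mN L(1) by (intro exI[of _ m] exI[of _ lam]) (auto simp: S_def)
qed

lemma reduce:
  assumes m: "0 < m" and lam: "\<forall>t\<le>m. lam t \<in> Apoly U"
    and rel: "\<forall>z\<in>Y. (\<Sum>t\<le>m. lam t z * h z ^ t) = (0::real)"
  shows "\<exists>\<beta>. (\<forall>i<m. \<beta> i \<in> Apoly U) \<and> (\<forall>z\<in>Y. lam m z ^ e * h z ^ e = (\<Sum>i<m. \<beta> i z * h z ^ i))"
proof (induction e)
  case 0
  obtain m' where m': "m = Suc m'" using m by (cases m) auto
  show ?case
  proof (rule exI[of _ "\<lambda>i z. if i = 0 then 1 else 0"], intro conjI)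
    show "\<forall>i<m. (\<lambda>z. if i = 0 then 1 else 0) \<in> Apoly U"
      using Apoly_const[of 1 U] Apoly_const[of 0 U] by auto
    show "\<forall>z\<in>Y. lam m z ^ 0 * h z ^ 0 = (\<Sum>i<m. (if i = 0 then 1 else 0) * h z ^ i)"
      unfolding m' sum.lessThan_Suc_shift by simp
  qed
next
  case (Suc e)
  obtain \<beta> where B: "\<forall>i<m. \<beta> i \<in> Apoly U" "\<forall>z\<in>Y. lam m z ^ e * h z ^ e = (\<Sum>i<m. \<beta> i z * h z ^ i)"
    using Suc.IH by blast
  obtain m' where m': "m = Suc m'" using m by (cases m) auto
  define \<beta>' where "\<beta>' i = (\<lambda>z. (if i = 0 then 0 else lam m z * \<beta> (i - 1) z) - \<beta> m' z * lam i z)" for i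
  show ?case
  proof (rule exI[of _ \<beta>'], intro conjI ballI allI impI)
    fix i assume "i < m"
    have "(\<lambda>z. (if i = 0 then 0 else lam m z * \<beta> (i - 1) z)) \<in> Apoly U"
      using B(1) lam \<open>i < m\<close> by (cases i) (auto intro: Apoly_mul Apoly_const)
    then show "\<beta>' i \<in> Apoly U" unfolding \<beta>'_def
      using B(1) lam \<open>i < m\<close> m' by (intro Apoly_diff Apoly_mul) auto
  next
    fix z assume z: "z \<in> Y"
    have hm: "lam m z * h z ^ m = - (\<Sum>i<m. lam i z * h z ^ i)"
      using rel z by (simp add: sum.atMost_Suc m' lessThan_Suc_atMost[symmetric] add_eq_0_iff2 eq_neg_iff_add_eq_0 add.commute)
    have "lam m z ^ Suc e * h z ^ Suc e = lam m z * h z * (lam m z ^ e * h z ^ e)"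
      by (simp add: algebra_simps)
    also have "\<dots> = lam m z * h z * (\<Sum>i<m. \<beta> i z * h z ^ i)" using B(2) z by simp
    also have "\<dots> = (\<Sum>i<m'. lam m z * \<beta> i z * h z ^ Suc i) + \<beta> m' z * (lam m z * h z ^ m)"
      by (simp add: m' sum_distrib_left algebra_simps)
    also have "\<dots> = (\<Sum>i<m'. lam m z * \<beta> i z * h z ^ Suc i) - \<beta> m' z * (\<Sum>i<m. lam i z * h z ^ i)"
      using hm by simp
    also have "(\<Sum>i<m'. lam m z * \<beta> i z * h z ^ Suc i) = (\<Sum>i<m. (if i = 0 then 0 else lam m z * \<beta> (i - 1) z) * h z ^ i)"
      unfolding m' sum.lessThan_Suc_shift by simp
    finally show "lam m z ^ Suc e * h z ^ Suc e = (\<Sum>i<m. \<beta>' i z * h z ^ i)"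
      by (simp add: \<beta>'_def sum_distrib_left sum_subtractf algebra_simps)
  qed
qed


lemma elim_lemma:
  fixes Y :: "('x \<Rightarrow> real) set" and I :: "'k set"
  assumes irr: "irred_alg UNIV Y" and fI: "finite I"
  shows "\<forall>(T::'t set) (B::'t \<Rightarrow> 'k \<Rightarrow> ('x \<Rightarrow> real) \<Rightarrow> real). finite T \<longrightarrow> card I < card T \<longrightarrow> (\<forall>t\<in>T. \<forall>k\<in>I. B t k \<in> Apoly U) \<longrightarrow>
    (\<exists>lam. (\<forall>t\<in>T. lam t \<in> Apoly U) \<and> (\<exists>t\<in>T. \<exists>z\<in>Y. lam t z \<noteq> 0)
       \<and> (\<forall>k\<in>I. \<forall>z\<in>Y. (\<Sum>t\<in>T. lam t z * B t k z) = 0))"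
  using fI
proof (induction I rule: finite_induct)
  case empty
  show ?case
  proof (intro allI impI)
    fix T :: "'t set" and B :: "'t \<Rightarrow> 'k \<Rightarrow> ('x \<Rightarrow> real) \<Rightarrow> real"
    assume "finite T" "card {} < card T"
    then obtain t0 where t0: "t0 \<in> T" by fastforce
    obtain z0 where z0: "z0 \<in> Y" using irr by (auto simp: irred_alg_def)
    show "\<exists>lam. (\<forall>t\<in>T. lam t \<in> Apoly U) \<and> (\<exists>t\<in>T. \<exists>z\<in>Y. lam t z \<noteq> 0)
       \<and> (\<forall>k\<in>{}. \<forall>z\<in>Y. (\<Sum>t\<in>T. lam t z * B t k z) = 0)"
      using t0 z0 Apoly_const[of 1 U] Apoly_const[of 0 U]
      by (intro exI[of _ "\<lambda>t z. if t = t0 then 1 else 0"]) auto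
  qed
next
  case (insert k I)
  show ?case
  proof (intro allI impI)
    fix T :: "'t set" and B :: "'t \<Rightarrow> 'k \<Rightarrow> ('x \<Rightarrow> real) \<Rightarrow> real"
    assume fT: "finite T" and cT: "card (insert k I) < card T" and BA: "\<forall>t\<in>T. \<forall>k\<in>insert k I. B t k \<in> Apoly U"
    have cI: "card (insert k I) = Suc (card I)" using insert by simp
    show "\<exists>lam. (\<forall>t\<in>T. lam t \<in> Apoly U) \<and> (\<exists>t\<in>T. \<exists>z\<in>Y. lam t z \<noteq> 0)
       \<and> (\<forall>k'\<in>insert k I. \<forall>z\<in>Y. (\<Sum>t\<in>T. lam t z * B t k' z) = 0)"
    proof (cases "\<forall>t\<in>T. \<forall>z\<in>Y. B t k z = 0")
      case True
      obtain lam where L: "\<forall>t\<in>T. lam t \<in> Apoly U" "\<exists>t\<in>T. \<exists>z\<in>Y. lam t z \<noteq> 0"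
        "\<forall>k\<in>I. \<forall>z\<in>Y. (\<Sum>t\<in>T. lam t z * B t k z) = 0"
      proof -
        have "card I < card T" using cT cI by simp
        moreover have "\<forall>t\<in>T. \<forall>k\<in>I. B t k \<in> Apoly U" using BA by blast
        ultimately show ?thesis using insert.IH fT that by blast
      qed
      show ?thesis using L True by (intro exI[of _ lam]) auto
    next
      case False
      then obtain t0 z0 where t0: "t0 \<in> T" "z0 \<in> Y" "B t0 k z0 \<noteq> 0" by blast
      define a where "a = B t0 k"
      define T' where "T' = T - {t0}"
      have fT': "finite T'" using fT by (simp add: T'_def)
      have cT': "card I < card T'" using cT cI t0 fT by (simp add: T'_def)
      define B' where "B' t k' = (\<lambda>z. a z * B t k' z - B t k z * B t0 k' z)" for t k'
      have B'A: "\<forall>t\<in>T'. \<forall>k'\<in>I. B' t k' \<in> Apoly U"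
      proof (intro ballI)
        fix t k' assume tk: "t \<in> T'" "k' \<in> I"
        then have "B t0 k \<in> Apoly U" "B t k' \<in> Apoly U" "B t k \<in> Apoly U" "B t0 k' \<in> Apoly U"
          using BA t0 by (auto simp: T'_def)
        then show "B' t k' \<in> Apoly U" unfolding B'_def a_def
          by (intro Apoly_diff Apoly_mul)
      qed
      obtain mu where M: "\<forall>t\<in>T'. mu t \<in> Apoly U" "\<exists>t\<in>T'. \<exists>z\<in>Y. mu t z \<noteq> 0"
        "\<forall>k'\<in>I. \<forall>z\<in>Y. (\<Sum>t\<in>T'. mu t z * B' t k' z) = 0"
        using insert.IH[rule_format, of T' B', OF fT' cT'] B'A by blast
      define lam where "lam t = (if t = t0 then (\<lambda>z. - (\<Sum>t'\<in>T'. mu t' z * B t' k z)) else (\<lambda>z. mu t z * a z))" for t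
      show ?thesis
      proof (rule exI[of _ lam], intro conjI ballI)
        fix t assume t: "t \<in> T"
        show "lam t \<in> Apoly U"
        proof (cases "t = t0")
          case True
          have "(\<lambda>z. \<Sum>t'\<in>T'. mu t' z * B t' k z) \<in> Apoly U"
            using M(1) BA fT' by (intro Apoly_sum Apoly_mul) (auto simp: T'_def)
          then show ?thesis unfolding lam_def using True by (simp add: Apoly_neg)
        next
          case False
          have "mu t \<in> Apoly U" "B t0 k \<in> Apoly U" using M(1) BA t t0 False by (auto simp: T'_def)
          then show ?thesis unfolding lam_def a_def using False by (simp add: Apoly_mul)
        qed
      next
        obtain t1 z1 where t1: "t1 \<in> T'" "z1 \<in> Y" "mu t1 z1 \<noteq> 0" using M(2) by blast
        have "\<exists>z\<in>Y. mu t1 z * a z \<noteq> 0"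
          using nonvan_mult[OF irr, of "mu t1" a] M(1) t1 t0 BA
          by (auto simp: a_def T'_def intro: Apoly_polys)
        then show "\<exists>t\<in>T. \<exists>z\<in>Y. lam t z \<noteq> 0" using t1 by (auto simp: lam_def T'_def)
      next
        fix k' z assume k': "k' \<in> insert k I" and z: "z \<in> Y"
        have T: "T = insert t0 T'" "t0 \<notin> T'" using t0 by (auto simp: T'_def)
        have "(\<Sum>t\<in>T. lam t z * B t k' z) = lam t0 z * B t0 k' z + (\<Sum>t\<in>T'. lam t z * B t k' z)"
          using T fT' by simp
        also have "(\<Sum>t\<in>T'. lam t z * B t k' z) = (\<Sum>t\<in>T'. mu t z * a z * B t k' z)"
          by (rule sum.cong) (auto simp: lam_def T'_def)
        finally have S: "(\<Sum>t\<in>T. lam t z * B t k' z) = - (\<Sum>t'\<in>T'. mu t' z * B t' k z) * B t0 k' z + (\<Sum>t\<in>T'. mu t z * a z * B t k' z)"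
          by (simp add: lam_def)
        show "(\<Sum>t\<in>T. lam t z * B t k' z) = 0"
        proof (cases "k' = k")
          case True
          have "(\<Sum>t\<in>T'. mu t z * a z * B t k z) = (\<Sum>t\<in>T'. mu t z * B t k z) * a z"
            unfolding sum_distrib_right by (rule sum.cong) (simp_all add: mult_ac)
          then show ?thesis unfolding S using True by (simp add: a_def)
        next
          case False
          then have "k' \<in> I" using k' by simp
          then have Z: "(\<Sum>t\<in>T'. mu t z * B' t k' z) = 0" using M(3) z by blast
          have "(\<Sum>t\<in>T'. mu t z * B' t k' z) = (\<Sum>t\<in>T'. mu t z * a z * B t k' z) - (\<Sum>t\<in>T'. mu t z * B t k z) * B t0 k' z"
          proof -
            have "(\<Sum>t\<in>T'. mu t z * B' t k' z) = (\<Sum>t\<in>T'. mu t z * a z * B t k' z - mu t z * B t k z * B t0 k' z)"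
              by (rule sum.cong) (simp_all add: B'_def algebra_simps)
            also have "\<dots> = (\<Sum>t\<in>T'. mu t z * a z * B t k' z) - (\<Sum>t\<in>T'. mu t z * B t k z) * B t0 k' z"
              by (simp add: sum_subtractf sum_distrib_right)
            finally show ?thesis .
          qed
          then show ?thesis unfolding S using Z by simp
        qed
      qed
    qed
  qed
qed

lemma alg_from_span:
  assumes irr: "irred_alg UNIV Y" and fI: "finite I" and w: "w \<in> Apoly U" "\<exists>z\<in>Y. w z \<noteq> 0"
    and sp: "\<forall>t\<le>card I. \<exists>B. (\<forall>k\<in>I. B k \<in> Apoly U) \<and> (\<forall>z\<in>Y. w z ^ t * \<Phi> z ^ t = (\<Sum>k\<in>I. B k z * F k z))"
  shows "alg_over Y U \<Phi>"
proof -
  define N where "N = card I"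
  have "\<forall>t. \<exists>Bt. t \<le> N \<longrightarrow> (\<forall>k\<in>I. Bt k \<in> Apoly U) \<and> (\<forall>z\<in>Y. w z ^ t * \<Phi> z ^ t = (\<Sum>k\<in>I. Bt k z * F k z))"
    using sp unfolding N_def by blast
  from choice[OF this] obtain B where B: "\<forall>t\<le>N. (\<forall>k\<in>I. B t k \<in> Apoly U) \<and> (\<forall>z\<in>Y. w z ^ t * \<Phi> z ^ t = (\<Sum>k\<in>I. B t k z * F k z))"
    by blast
  have "\<exists>lam. (\<forall>t\<in>{..N}. lam t \<in> Apoly U) \<and> (\<exists>t\<in>{..N}. \<exists>z\<in>Y. lam t z \<noteq> 0)
       \<and> (\<forall>k\<in>I. \<forall>z\<in>Y. (\<Sum>t\<in>{..N}. lam t z * B t k z) = 0)"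
  proof (rule elim_lemma[OF irr fI, rule_format])
    show "finite {..N}" by simp
    show "card I < card {..N}" by (simp add: N_def)
    show "B t k \<in> Apoly U" if "t \<in> {..N}" "k \<in> I" for t k using B that by auto
  qed
  then obtain lam where L: "\<forall>t\<in>{..N}. lam t \<in> Apoly U" "\<exists>t\<in>{..N}. \<exists>z\<in>Y. lam t z \<noteq> 0"
    "\<forall>k\<in>I. \<forall>z\<in>Y. (\<Sum>t\<in>{..N}. lam t z * B t k z) = 0"
    by blast
  show ?thesis unfolding alg_over_def
  proof (rule exI[of _ N], rule exI[of _ "\<lambda>t z. lam t z * w z ^ t"], intro conjI allI impI ballI)
    fix t assume "t \<le> N"
    then show "(\<lambda>z. lam t z * w z ^ t) \<in> Apoly U" using L(1) w(1) by (auto intro: Apoly_mul Apoly_power)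
  next
    obtain t1 z1 where t1: "t1 \<le> N" "z1 \<in> Y" "lam t1 z1 \<noteq> 0" using L(2) by auto
    have "\<exists>z\<in>Y. lam t1 z * w z ^ t1 \<noteq> 0"
      using nonvan_mult[OF irr, of "lam t1" "\<lambda>z. w z ^ t1"] L(1) t1 w
      by (auto intro: Apoly_polys Apoly_power)
    then show "\<exists>t\<le>N. \<exists>z\<in>Y. lam t z * w z ^ t \<noteq> 0" using t1 by auto
  next
    fix z assume z: "z \<in> Y"
    have "(\<Sum>t\<le>N. lam t z * w z ^ t * \<Phi> z ^ t) = (\<Sum>t\<le>N. lam t z * (\<Sum>k\<in>I. B t k z * F k z))"
      using B z by (intro sum.cong) (auto simp: mult.assoc)
    also have "\<dots> = (\<Sum>k\<in>I. (\<Sum>t\<le>N. lam t z * B t k z) * F k z)"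
      by (simp only: sum_distrib_left sum_distrib_right mult.assoc) (rule sum.swap)
    also have "\<dots> = 0" using L(3) z by simp
    finally show "(\<Sum>t\<le>N. lam t z * w z ^ t * \<Phi> z ^ t) = 0" .
  qed
qed


definition inspan :: "('x \<Rightarrow> real) set \<Rightarrow> 'x set \<Rightarrow> 'k set \<Rightarrow> ('k \<Rightarrow> ('x \<Rightarrow> real) \<Rightarrow> real) \<Rightarrow> (('x \<Rightarrow> real) \<Rightarrow> real) \<Rightarrow> bool" where
  "inspan Y U I F f \<longleftrightarrow> (\<exists>B. (\<forall>k\<in>I. B k \<in> Apoly U) \<and> (\<forall>z\<in>Y. f z = (\<Sum>k\<in>I. B k z * F k z)))"

lemma inspan_sum:
  assumes "finite A" "\<And>a. a \<in> A \<Longrightarrow> inspan Y U I F (G a)" "finite I"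
  shows "inspan Y U I F (\<lambda>z. \<Sum>a\<in>A. G a z)"
  using assms
proof (induction A rule: finite_induct)
  case empty
  show ?case unfolding inspan_def
    by (rule exI[of _ "\<lambda>k z. 0"]) (auto intro: Apoly_const)
next
  case (insert a A)
  obtain B1 where B1: "\<forall>k\<in>I. B1 k \<in> Apoly U" "\<forall>z\<in>Y. G a z = (\<Sum>k\<in>I. B1 k z * F k z)"
    using insert.prems(1) unfolding inspan_def by blast
  obtain B2 where B2: "\<forall>k\<in>I. B2 k \<in> Apoly U" "\<forall>z\<in>Y. (\<Sum>a\<in>A. G a z) = (\<Sum>k\<in>I. B2 k z * F k z)"
    using insert.IH insert.prems unfolding inspan_def by blast
  show ?case unfolding inspan_def
  proof (rule exI[of _ "\<lambda>k z. B1 k z + B2 k z"], intro conjI ballI)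
    fix k assume "k \<in> I" then show "(\<lambda>z. B1 k z + B2 k z) \<in> Apoly U" using B1 B2 by (simp add: Apoly_add)
  next
    fix z assume z: "z \<in> Y"
    have "(\<Sum>a\<in>insert a A. G a z) = G a z + (\<Sum>a\<in>A. G a z)" using insert.hyps by simp
    also have "\<dots> = (\<Sum>k\<in>I. B1 k z * F k z) + (\<Sum>k\<in>I. B2 k z * F k z)" using B1 B2 z by simp
    also have "\<dots> = (\<Sum>k\<in>I. (B1 k z + B2 k z) * F k z)" by (simp add: sum.distrib distrib_right)
    finally show "(\<Sum>a\<in>insert a A. G a z) = (\<Sum>k\<in>I. (B1 k z + B2 k z) * F k z)" .
  qed
qed

lemma inspan_scale:
  assumes "inspan Y U I F f" "a \<in> Apoly U"
  shows "inspan Y U I F (\<lambda>z. a z * f z)"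
proof -
  obtain B where B: "\<forall>k\<in>I. B k \<in> Apoly U" "\<forall>z\<in>Y. f z = (\<Sum>k\<in>I. B k z * F k z)"
    using assms(1) unfolding inspan_def by blast
  show ?thesis unfolding inspan_def
  proof (rule exI[of _ "\<lambda>k z. a z * B k z"], intro conjI ballI)
    fix k assume "k \<in> I" then show "(\<lambda>z. a z * B k z) \<in> Apoly U" using B assms(2) by (simp add: Apoly_mul)
  next
    fix z assume "z \<in> Y"
    then show "a z * f z = (\<Sum>k\<in>I. a z * B k z * F k z)" using B by (simp add: sum_distrib_left mult.assoc)
  qed
qed

lemma inspan_cong:
  assumes "inspan Y U I F f" "\<forall>z\<in>Y. f z = g z" shows "inspan Y U I F g"
  using assms unfolding inspan_def by auto

lemma alg_over_addmul:
  assumes irr: "irred_alg UNIV Y" and g: "alg_over Y U g" and h: "alg_over Y U h"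
  shows "alg_over Y U (\<lambda>z. g z + h z) \<and> alg_over Y U (\<lambda>z. g z * h z)"
proof -
  obtain m lam where G: "0 < m" "\<forall>t\<le>m. lam t \<in> Apoly U" "\<exists>z\<in>Y. lam m z \<noteq> 0"
     "\<forall>z\<in>Y. (\<Sum>t\<le>m. lam t z * g z ^ t) = 0" using alg_over_norm[OF g] by blast
  obtain n mu where H: "0 < n" "\<forall>t\<le>n. mu t \<in> Apoly U" "\<exists>z\<in>Y. mu n z \<noteq> 0"
     "\<forall>z\<in>Y. (\<Sum>t\<le>n. mu t z * h z ^ t) = 0" using alg_over_norm[OF h] by blast
  define c where "c = lam m"
  define d where "d = mu n"
  have cA: "c \<in> Apoly U" and dA: "d \<in> Apoly U" using G H by (auto simp: c_def d_def)
  define I where "I = {..<m} \<times> {..<n}"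
  define F where "F = (\<lambda>(i,j) z. g z ^ i * h z ^ j)"
  have fI: "finite I" by (simp add: I_def)
  have sp: "inspan Y U I F (\<lambda>z. (c z ^ e * g z ^ e) * (d z ^ f * h z ^ f))" for e f
  proof -
    obtain \<beta> where \<beta>: "\<forall>i<m. \<beta> i \<in> Apoly U" "\<forall>z\<in>Y. c z ^ e * g z ^ e = (\<Sum>i<m. \<beta> i z * g z ^ i)"
      using reduce[OF G(1,2,4)] unfolding c_def by blast
    obtain \<gamma> where \<gamma>: "\<forall>j<n. \<gamma> j \<in> Apoly U" "\<forall>z\<in>Y. d z ^ f * h z ^ f = (\<Sum>j<n. \<gamma> j z * h z ^ j)"
      using reduce[OF H(1,2,4)] unfolding d_def by blast
    show ?thesis unfolding inspan_def
    proof (rule exI[of _ "\<lambda>(i,j) z. \<beta> i z * \<gamma> j z"], intro conjI ballI)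
      fix k assume "k \<in> I"
      then show "(case k of (i,j) \<Rightarrow> \<lambda>z. \<beta> i z * \<gamma> j z) \<in> Apoly U"
        using \<beta> \<gamma> by (auto simp: I_def intro: Apoly_mul)
    next
      fix z assume z: "z \<in> Y"
      have "(c z ^ e * g z ^ e) * (d z ^ f * h z ^ f) = (\<Sum>i<m. \<beta> i z * g z ^ i) * (\<Sum>j<n. \<gamma> j z * h z ^ j)"
        using \<beta> \<gamma> z by simp
      also have "\<dots> = (\<Sum>i<m. \<Sum>j<n. (\<beta> i z * g z ^ i) * (\<gamma> j z * h z ^ j))" by (rule sum_product)
      also have "\<dots> = (\<Sum>(i,j)\<in>I. (\<beta> i z * g z ^ i) * (\<gamma> j z * h z ^ j))"
        unfolding I_def by (rule sum.cartesian_product)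
      also have "\<dots> = (\<Sum>k\<in>I. (case k of (i,j) \<Rightarrow> \<lambda>z. \<beta> i z * \<gamma> j z) z * F k z)"
        by (rule sum.cong) (auto simp: F_def mult_ac)
      finally show "(c z ^ e * g z ^ e) * (d z ^ f * h z ^ f) = (\<Sum>k\<in>I. (case k of (i,j) \<Rightarrow> \<lambda>z. \<beta> i z * \<gamma> j z) z * F k z)" .
    qed
  qed
  define w where "w = (\<lambda>z. c z * d z)"
  have wA: "w \<in> Apoly U" using cA dA by (simp add: w_def Apoly_mul)
  have wnz: "\<exists>z\<in>Y. w z \<noteq> 0" unfolding w_def
    using nonvan_mult[OF irr, of c d] cA dA G(3) H(3) by (auto simp: c_def d_def intro: Apoly_polys)
  have mul: "alg_over Y U (\<lambda>z. g z * h z)"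
  proof (rule alg_from_span[OF irr fI wA wnz, where F = F])
    show "\<forall>t\<le>card I. \<exists>B. (\<forall>k\<in>I. B k \<in> Apoly U) \<and> (\<forall>z\<in>Y. w z ^ t * (g z * h z) ^ t = (\<Sum>k\<in>I. B k z * F k z))"
    proof (intro allI impI)
      fix t
      have "inspan Y U I F (\<lambda>z. w z ^ t * (g z * h z) ^ t)"
        by (rule inspan_cong[OF sp[of t t]]) (simp add: w_def power_mult_distrib mult_ac)
      then show "\<exists>B. (\<forall>k\<in>I. B k \<in> Apoly U) \<and> (\<forall>z\<in>Y. w z ^ t * (g z * h z) ^ t = (\<Sum>k\<in>I. B k z * F k z))"
        unfolding inspan_def .
    qed
  qed
  have add: "alg_over Y U (\<lambda>z. g z + h z)"
  proof (rule alg_from_span[OF irr fI wA wnz, where F = F])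
    show "\<forall>t\<le>card I. \<exists>B. (\<forall>k\<in>I. B k \<in> Apoly U) \<and> (\<forall>z\<in>Y. w z ^ t * (g z + h z) ^ t = (\<Sum>k\<in>I. B k z * F k z))"
    proof (intro allI impI)
      fix t
      have trm: "inspan Y U I F (\<lambda>z. (of_nat (t choose e) * c z ^ (t - e) * d z ^ e) * ((c z ^ e * g z ^ e) * (d z ^ (t - e) * h z ^ (t - e))))" for e
      proof (rule inspan_scale[OF sp])
        show "(\<lambda>z. of_nat (t choose e) * c z ^ (t - e) * d z ^ e) \<in> Apoly U"
          using cA dA by (intro Apoly_mul Apoly_power Apoly_const)
      qed
      have A: "inspan Y U I F (\<lambda>z. \<Sum>e\<le>t. (of_nat (t choose e) * c z ^ (t - e) * d z ^ e) * ((c z ^ e * g z ^ e) * (d z ^ (t - e) * h z ^ (t - e))))"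
        by (rule inspan_sum) (use trm fI in auto)
      have Bq: "(\<Sum>e\<le>t. (of_nat (t choose e) * c z ^ (t - e) * d z ^ e) * ((c z ^ e * g z ^ e) * (d z ^ (t - e) * h z ^ (t - e))))
          = w z ^ t * (g z + h z) ^ t" for z
      proof -
        have "w z ^ t * (g z + h z) ^ t = w z ^ t * (\<Sum>e\<le>t. of_nat (t choose e) * g z ^ e * h z ^ (t - e))"
          by (simp add: binomial_ring)
        also have "\<dots> = (\<Sum>e\<le>t. w z ^ t * (of_nat (t choose e) * g z ^ e * h z ^ (t - e)))"
          by (simp add: sum_distrib_left)
        also have "\<dots> = (\<Sum>e\<le>t. (of_nat (t choose e) * c z ^ (t - e) * d z ^ e) * ((c z ^ e * g z ^ e) * (d z ^ (t - e) * h z ^ (t - e))))"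
        proof (rule sum.cong)
          fix e assume "e \<in> {..t}"
          then obtain r where r: "t = e + r" by (auto dest: le_Suc_ex)
          show "w z ^ t * (of_nat (t choose e) * g z ^ e * h z ^ (t - e)) = (of_nat (t choose e) * c z ^ (t - e) * d z ^ e) * ((c z ^ e * g z ^ e) * (d z ^ (t - e) * h z ^ (t - e)))"
            unfolding r w_def by (simp add: power_add power_mult_distrib mult_ac)
        qed simp
        finally show ?thesis by simp
      qed
      have "inspan Y U I F (\<lambda>z. w z ^ t * (g z + h z) ^ t)"
        by (rule inspan_cong[OF A]) (simp add: Bq)
      then show "\<exists>B. (\<forall>k\<in>I. B k \<in> Apoly U) \<and> (\<forall>z\<in>Y. w z ^ t * (g z + h z) ^ t = (\<Sum>k\<in>I. B k z * F k z))"
        unfolding inspan_def .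
    qed
  qed
  show ?thesis using add mul by simp
qed


definition FRs :: "'x set \<Rightarrow> ('x \<Rightarrow> real) set" where
  "FRs V = {z. \<forall>y. y \<notin> V \<longrightarrow> z y = 0}"

definition rst :: "'x set \<Rightarrow> ('x \<Rightarrow> 'a::zero) \<Rightarrow> ('x \<Rightarrow> 'a)" where
  "rst U z = (\<lambda>v. if v \<in> U then z v else 0)"

lemma rst_polys: "(\<lambda>z. rst U z v) \<in> polys (UNIV::'a::field_char_0 set)"
  by (cases "v \<in> U") (auto simp: rst_def intro: pvar' pconstU)

lemma rst_Apoly: "f \<in> polys UNIV \<Longrightarrow> (\<lambda>z. f (rst U z)) \<in> Apoly U"
  unfolding Apoly_def dep_on_def
proof (intro CollectI conjI allI impI)
  assume "f \<in> polys UNIV"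
  then show "(\<lambda>z. f (rst U z)) \<in> polys UNIV" by (rule polys_subst) (rule rst_polys)
next
  fix z z' :: "'a \<Rightarrow> real" assume "\<forall>y\<in>U. z y = z' y"
  then have "rst U z = rst U z'" by (auto simp: rst_def)
  then show "f (rst U z) = f (rst U z')" by simp
qed

lemma decomp:
  assumes "y \<notin> U" "f \<in> polys UNIV" "dep_on (insert y U) f"
  shows "\<exists>m a. (\<forall>j\<le>m. a j \<in> Apoly U) \<and> (\<forall>z. f z = (\<Sum>j\<le>m. a j z * z y ^ j))"
proof -
  obtain pz m where P: "\<forall>z. f z = poly (pz z) (z y)" "\<forall>z t. pz (z(y:=t)) = pz z"
     "\<forall>j. (\<lambda>z. coeff (pz z) j) \<in> polys UNIV" "\<forall>z. degree (pz z) \<le> m"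
    using univ_decomp[OF assms(2), of y] by blast
  define a where "a j = (\<lambda>z. coeff (pz (rst U z)) j)" for j
  show ?thesis
  proof (rule exI[of _ m], rule exI[of _ a], intro conjI allI impI)
    fix j show "a j \<in> Apoly U" unfolding a_def using rst_Apoly[OF P(3)[rule_format, of j]] by simp
  next
    fix z :: "'a \<Rightarrow> real"
    have "f z = f ((rst U z)(y := z y))"
      using assms(3) assms(1) unfolding dep_on_def by (auto simp: rst_def)
    also have "\<dots> = poly (pz ((rst U z)(y := z y))) (z y)" using P(1) by simp
    also have "\<dots> = poly (pz (rst U z)) (z y)" using P(2) by simp
    also have "\<dots> = (\<Sum>j\<le>m. a j z * z y ^ j)" unfolding a_def using P(4) by (simp add: poly_le_sum)
    finally show "f z = (\<Sum>j\<le>m. a j z * z y ^ j)" .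
  qed
qed

lemma alg_over_simple:
  assumes "Y \<noteq> {}" "b \<in> Apoly U" "\<forall>z\<in>Y. b z + h z = 0"
  shows "alg_over Y U h"
  unfolding alg_over_def
proof (rule exI[of _ 1], rule exI[of _ "\<lambda>t. if t = 0 then b else (\<lambda>_. 1)"], intro conjI)
  show "\<forall>t\<le>(1::nat). (if t = 0 then b else (\<lambda>_. 1)) \<in> Apoly U" using assms(2) Apoly_const by auto
  show "\<exists>t\<le>(1::nat). \<exists>z\<in>Y. (if t = 0 then b else (\<lambda>_. 1)) z \<noteq> 0" 
  proof -
    obtain z where z: "z \<in> Y" using assms(1) by blast
    have "(if (1::nat) = 0 then b else (\<lambda>_. 1)) z \<noteq> 0" by simp
    then show ?thesis using z by blast
  qed
  show "\<forall>z\<in>Y. (\<Sum>t\<le>(1::nat). (if t = 0 then b else (\<lambda>_. 1)) z * h z ^ t) = 0" using assms(3) by simp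
qed

lemma all_alg:
  assumes irr: "irred_alg UNIV Y" and vars: "\<And>y. alg_over Y U (\<lambda>z. z y)" and f: "f \<in> polys UNIV"
  shows "alg_over Y U f"
  using f
proof induction
  case (pconst c)
  show ?case using irr by (intro alg_over_simple[of _ "\<lambda>_. - c"]) (auto simp: irred_alg_def intro: Apoly_const)
next
  case (pvar x) then show ?case by (rule vars)
next
  case (padd f g) then show ?case using alg_over_addmul[OF irr] by blast
next
  case (pmul f g) then show ?case using alg_over_addmul[OF irr] by blast
qed

lemma indep_mono: "indep Y U \<Longrightarrow> Y \<subseteq> Y' \<Longrightarrow> indep Y' U"
  unfolding indep_def by blast

lemma key:
  fixes Y Y' :: "('x \<Rightarrow> real) set"
  assumes irrY: "irred_alg UNIV Y" and irrY': "irred_alg UNIV Y'" and sub: "Y \<subset> Y'"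
    and FR: "Y' \<subseteq> FRs V" and UV: "U \<subseteq> V" and ind: "indep Y U"
    and mx: "\<forall>w\<in>V - U. \<not> indep Y' (insert w U)"
  shows False
proof -
  have ind': "indep Y' U" using indep_mono[OF ind] sub by blast
  have neY': "Y' \<noteq> {}" using irrY' by (simp add: irred_alg_def)
  have vars: "alg_over Y' U (\<lambda>z. z y)" for y
  proof (cases "y \<in> U")
    case True
    then show ?thesis using neY' by (intro alg_over_simple[of _ "\<lambda>z. - z y"]) (auto intro: Apoly_neg Apoly_var)
  next
    case False
    show ?thesis
    proof (cases "y \<in> V")
      case False
      then show ?thesis using neY' FR by (intro alg_over_simple[of _ "\<lambda>_. 0"]) (auto simp: FRs_def intro: Apoly_const)
    next
      case True
      then have "\<not> indep Y' (insert y U)" using mx \<open>y \<notin> U\<close> by blast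
      then obtain f where f: "f \<in> Apoly (insert y U)" "\<forall>z\<in>Y'. f z = 0" "\<exists>z. f z \<noteq> 0"
        unfolding indep_def by blast
      obtain m a where A: "\<forall>j\<le>m. a j \<in> Apoly U" "\<forall>z. f z = (\<Sum>j\<le>m. a j z * z y ^ j)"
        using decomp[OF \<open>y \<notin> U\<close>, of f] f(1) unfolding Apoly_def by blast
      have "\<exists>j\<le>m. \<exists>z\<in>Y'. a j z \<noteq> 0"
      proof (rule ccontr)
        assume "\<not> (\<exists>j\<le>m. \<exists>z\<in>Y'. a j z \<noteq> 0)"
        then have "\<forall>j\<le>m. \<forall>z. a j z = 0" using ind' A(1) unfolding indep_def by blast
        then have "\<forall>z. f z = 0" using A(2) by simp
        then show False using f(3) by blast
      qed
      then show ?thesis unfolding alg_over_def using A f(2)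
        by (intro exI[of _ m] exI[of _ a]) auto
    qed
  qed
  obtain z0 where z0: "z0 \<in> Y'" "z0 \<notin> Y" using sub by blast
  have algY: "alg_set UNIV Y" using irrY by (simp add: irred_alg_def)
  obtain h where h: "h \<in> polys UNIV" "\<forall>z\<in>Y. h z = 0" "h z0 \<noteq> 0"
    using alg_set_vanish[OF algY z0(2)] by blast
  have "alg_over Y' U h" by (rule all_alg[OF irrY' vars h(1)])
  then obtain N lam where L: "\<forall>t\<le>N. lam t \<in> Apoly U" "\<exists>t\<le>N. \<exists>z\<in>Y'. lam t z \<noteq> 0"
      "\<forall>z\<in>Y'. (\<Sum>t\<le>N. lam t z * h z ^ t) = 0"
    unfolding alg_over_def by blast
  define S where "S = {t. t \<le> N \<and> (\<exists>z\<in>Y'. lam t z \<noteq> 0)}"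
  have fS: "finite S" and neS: "S \<noteq> {}" using L(2) by (auto simp: S_def)
  define k where "k = Min S"
  have kS: "k \<in> S" using fS neS by (simp add: k_def)
  have below: "\<forall>z\<in>Y'. lam t z = 0" if "t < k" for t
  proof (rule ccontr)
    assume "\<not> (\<forall>z\<in>Y'. lam t z = 0)"
    moreover have "t \<le> N" using that kS by (simp add: S_def)
    ultimately have "t \<in> S" by (auto simp: S_def)
    then have "k \<le> t" using fS by (simp add: k_def)
    then show False using that by simp
  qed
  have kN: "k \<le> N" using kS by (simp add: S_def)
  define R where "R = (\<lambda>z. \<Sum>t\<in>{k..N}. lam t z * h z ^ (t - k))"
  have RP: "R \<in> polys UNIV" unfolding R_def
    using L(1) h(1) by (intro polys_sum polys_mul polys_power) (auto intro: Apoly_polys)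
  have hkR: "\<forall>z\<in>Y'. h z ^ k * R z = 0"
  proof
    fix z assume z: "z \<in> Y'"
    have split: "{..N} = {..<k} \<union> {k..N}" using kN by auto
    have "(\<Sum>t\<le>N. lam t z * h z ^ t) = (\<Sum>t<k. lam t z * h z ^ t) + (\<Sum>t\<in>{k..N}. lam t z * h z ^ t)"
      unfolding split by (rule sum.union_disjoint) auto
    also have "(\<Sum>t<k. lam t z * h z ^ t) = 0" using below z by simp
    also have "(\<Sum>t\<in>{k..N}. lam t z * h z ^ t) = h z ^ k * R z"
      unfolding R_def sum_distrib_left
    proof (rule sum.cong)
      fix t assume "t \<in> {k..N}"
      then obtain r where "t = k + r" by (auto dest: le_Suc_ex)
      then show "lam t z * h z ^ t = h z ^ k * (lam t z * h z ^ (t - k))" by (simp add: power_add mult_ac)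
    qed simp
    finally show "h z ^ k * R z = 0" using L(3) z by simp
  qed
  have "(\<forall>z\<in>Y'. h z ^ k = 0) \<or> (\<forall>z\<in>Y'. R z = 0)"
    by (rule irred_domain[OF irrY' polys_power[OF h(1)] RP hkR])
  moreover have "\<not> (\<forall>z\<in>Y'. h z ^ k = 0)" using z0 h(3) by auto
  ultimately have R0: "\<forall>z\<in>Y'. R z = 0" by blast
  have "\<forall>z\<in>Y. lam k z = 0"
  proof
    fix z assume z: "z \<in> Y"
    have "R z = lam k z * h z ^ (k - k) + (\<Sum>t\<in>{Suc k..N}. lam t z * h z ^ (t - k))"
      unfolding R_def using kN by (simp add: sum.atLeast_Suc_atMost)
    also have "(\<Sum>t\<in>{Suc k..N}. lam t z * h z ^ (t - k)) = 0"
      using h(2) z by (intro sum.neutral) auto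
    finally have "R z = lam k z" by simp
    then show "lam k z = 0" using R0 z sub by auto
  qed
  then have "\<forall>z. lam k z = 0" using ind L(1) kN unfolding indep_def by blast
  then show False using kS by (auto simp: S_def)
qed

definition rk :: "'x set \<Rightarrow> ('x \<Rightarrow> real) set \<Rightarrow> nat" where
  "rk V Y = Max (card ` {U. U \<subseteq> V \<and> indep Y U})"

lemma indep_empty: "Y \<noteq> {} \<Longrightarrow> indep Y {}"
  unfolding indep_def Apoly_def dep_on_def by (auto; metis)

lemma rk_props:
  assumes "finite V" "Y \<noteq> {}"
  shows "\<exists>U. U \<subseteq> V \<and> indep Y U \<and> card U = rk V Y"
    and "U \<subseteq> V \<Longrightarrow> indep Y U \<Longrightarrow> card U \<le> rk V Y"
    and "rk V Y \<le> card V"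
proof -
  have fin: "finite (card ` {U. U \<subseteq> V \<and> indep Y U})" using assms(1) by simp
  have ne: "card ` {U. U \<subseteq> V \<and> indep Y U} \<noteq> {}" using indep_empty[OF assms(2)] by blast
  show "\<exists>U. U \<subseteq> V \<and> indep Y U \<and> card U = rk V Y"
    using Max_in[OF fin ne] unfolding rk_def by auto
  show "U \<subseteq> V \<Longrightarrow> indep Y U \<Longrightarrow> card U \<le> rk V Y"
    unfolding rk_def using fin by (intro Max_ge) auto
  show "rk V Y \<le> card V"
    using Max_in[OF fin ne] assms(1) card_mono unfolding rk_def by auto
qed

lemma rk_strict:
  assumes fV: "finite V" and irrY: "irred_alg UNIV Y" and irrY': "irred_alg UNIV Y'"
    and sub: "Y \<subset> Y'" and FR: "Y' \<subseteq> FRs V"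
  shows "rk V Y < rk V Y'"
proof -
  have neY: "Y \<noteq> {}" using irrY by (simp add: irred_alg_def)
  have neY': "Y' \<noteq> {}" using irrY' by (simp add: irred_alg_def)
  obtain U where U: "U \<subseteq> V" "indep Y U" "card U = rk V Y" using rk_props(1)[OF fV neY] by blast
  have "card U \<le> rk V Y'" using rk_props(2)[OF fV neY' U(1)] indep_mono[OF U(2)] sub by blast
  moreover have "rk V Y' \<noteq> rk V Y"
  proof
    assume eq: "rk V Y' = rk V Y"
    have "\<forall>w\<in>V - U. \<not> indep Y' (insert w U)"
    proof (intro ballI notI)
      fix w assume w: "w \<in> V - U" and i: "indep Y' (insert w U)"
      have "card (insert w U) \<le> rk V Y'" using rk_props(2)[OF fV neY' _ i] w U(1) by blast
      moreover have "card (insert w U) = Suc (card U)" using w U(1) fV finite_subset by fastforce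
      ultimately show False using eq U(3) by simp
    qed
    then show False using key[OF irrY irrY' sub FR U(1,2)] by blast
  qed
  ultimately show ?thesis using U(3) by simp
qed

lemma chain_bound:
  assumes fV: "finite V" and irr: "\<forall>i\<le>n. irred_alg UNIV (Z i)" and ch: "\<forall>i<n. Z i \<subset> Z (Suc i)"
    and FR: "Z n \<subseteq> FRs V"
  shows "n \<le> rk V (Z n)" and "rk V (Z n) \<le> card V"
proof -
  have mono: "j \<le> n \<Longrightarrow> i \<le> j \<Longrightarrow> Z i \<subseteq> Z j" for i j
  proof (induction j)
    case 0 then show ?case by simp
  next
    case (Suc j)
    show ?case
    proof (cases "i = Suc j")
      case True then show ?thesis by simp
    next
      case False
      then have "Z i \<subseteq> Z j" using Suc by simp
      moreover have "Z j \<subset> Z (Suc j)" using ch Suc.prems by simp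
      ultimately show ?thesis by blast
    qed
  qed
  have "i \<le> n \<Longrightarrow> i \<le> rk V (Z i)" for i
  proof (induction i)
    case 0 then show ?case by simp
  next
    case (Suc i)
    have "rk V (Z i) < rk V (Z (Suc i))"
    proof (rule rk_strict[OF fV])
      show "irred_alg UNIV (Z i)" "irred_alg UNIV (Z (Suc i))" using irr Suc.prems by auto
      show "Z i \<subset> Z (Suc i)" using ch Suc.prems by auto
      have "Z (Suc i) \<subseteq> Z n" using mono[of n "Suc i"] Suc.prems by simp
      then show "Z (Suc i) \<subseteq> FRs V" using FR by blast
    qed
    then show ?case using Suc by simp
  qed
  then show "n \<le> rk V (Z n)" by simp
  show "rk V (Z n) \<le> card V" using rk_props(3)[OF fV] irr by (simp add: irred_alg_def)
qed

lemma full_dim: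
  assumes fV: "finite V" and algZ: "alg_set UNIV Z" and ZFR: "Z \<subseteq> FRs V"
    and irr: "\<forall>i\<le>n. irred_alg UNIV (C i)" and ch: "\<forall>i<n. C i \<subset> C (Suc i)" and CZ: "C n \<subseteq> Z"
    and n: "n = card V"
  shows "FRs V \<subseteq> Z"
proof -
  have CFR: "C n \<subseteq> FRs V" using CZ ZFR by blast
  have neC: "C n \<noteq> {}" using irr by (simp add: irred_alg_def)
  have "rk V (C n) = card V" using chain_bound[OF fV irr ch CFR] n by simp
  then obtain U where U: "U \<subseteq> V" "indep (C n) U" "card U = card V" using rk_props(1)[OF fV neC] by metis
  have "U = V" using U fV by (simp add: card_subset_eq)
  then have indV: "indep (C n) V" using U by simp
  obtain P where P: "P \<subseteq> polys UNIV" "Z = zero_set P" using algZ by (rule alg_setE)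
  show ?thesis
  proof
    fix z assume z: "z \<in> FRs V"
    show "z \<in> Z" unfolding P(2) zero_set_iff
    proof
      fix f assume f: "f \<in> P"
      have rA: "(\<lambda>w. f (rst V w)) \<in> Apoly V" using rst_Apoly P(1) f by blast
      have rr: "rst V w = w" if "w \<in> FRs V" for w
        using that by (auto simp: rst_def FRs_def)
      have "\<forall>w\<in>C n. f (rst V w) = 0"
      proof
        fix w assume w: "w \<in> C n"
        then have "w \<in> Z" using CZ by blast
        then have "f w = 0" using f P(2) by (simp add: zero_set_iff)
        then show "f (rst V w) = 0" using rr w CFR by auto
      qed
      then have "\<forall>w. f (rst V w) = 0" using bspec[OF indV[unfolded indep_def] rA] by simp
      then show "f z = 0" using rr[OF z] by metis
    qed
  qed
qed


section \<open>Equivalent pairs as an algebraic set\<close>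

lemma pc_True: "pc e (True,x,i) = fst e x i" and pc_False: "pc e (False,x,i) = snd e x i"
  by (simp_all add: pc_def)

lemma pc_inj: "pc e = pc e' \<Longrightarrow> e = e'"
proof -
  assume h: "pc e = pc e'"
  have "fst e = fst e'" using fun_cong[OF h, of "(True,_,_)"] by (auto simp: pc_def)
  moreover have "snd e = snd e'" using fun_cong[OF h, of "(False,_,_)"] by (auto simp: pc_def)
  ultimately show "e = e'" by (simp add: prod_eq_iff)
qed

definition unpc :: "(bool \<times> 'v \<times> nat \<Rightarrow> 'a) \<Rightarrow> ('v \<Rightarrow> nat \<Rightarrow> 'a) \<times> ('v \<Rightarrow> nat \<Rightarrow> 'a)" where
  "unpc z = ((\<lambda>x i. z (True,x,i)), (\<lambda>x i. z (False,x,i)))"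

lemma pc_unpc: "pc (unpc z) = z"
  by (rule ext) (auto simp: pc_def unpc_def split: bool.splits)

definition sqc :: "nat \<Rightarrow> (bool \<times> 'v \<times> nat \<Rightarrow> 'a::comm_ring_1) \<Rightarrow> 'v \<Rightarrow> 'v \<Rightarrow> 'a" where
  "sqc d z a b = (\<Sum>i<d. (z (True,a,i) - z (True,b,i))^2) - (\<Sum>i<d. (z (False,a,i) - z (False,b,i))^2)"

definition EPc :: "('v \<Rightarrow> 'v \<Rightarrow> bool) \<Rightarrow> nat \<Rightarrow> (bool \<times> 'v \<times> nat \<Rightarrow> 'a::comm_ring_1) set" where
  "EPc G d = {z. (\<forall>b x i. d \<le> i \<longrightarrow> z (b,x,i) = 0) \<and> (\<forall>a b. G a b \<longrightarrow> sqc d z a b = 0)}"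

lemma pc_Eplus: "pc ` Eplus G d = EPc G d"
proof (intro equalityI subsetI)
  fix z assume "z \<in> pc ` Eplus G d"
  then obtain p q where pq: "(p,q) \<in> Eplus G d" "z = pc (p,q)" by auto
  then show "z \<in> EPc G d"
    by (auto simp: EPc_def Eplus_def frameworks_def equivalent_def sqd_def sqc_def pc_def)
next
  fix z :: "bool \<times> 'a \<times> nat \<Rightarrow> real" assume z: "z \<in> EPc G d"
  have "unpc z \<in> Eplus G d"
    using z by (auto simp: EPc_def Eplus_def frameworks_def equivalent_def sqd_def sqc_def unpc_def)
  then show "z \<in> pc ` Eplus G d" using pc_unpc[of z] by (metis image_eqI)
qed

lemma sqc_polys: "(\<lambda>z. sqc d z a b) \<in> polys (UNIV::'a::field_char_0 set)"
  unfolding sqc_def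
  by (intro polys_diff polys_sum polys_power) (auto intro: pvar')

lemma EPc_alg:
  fixes G :: "'v \<Rightarrow> 'v \<Rightarrow> bool"
  shows "alg_set (UNIV::'a::field_char_0 set) (EPc G d :: (bool \<times> 'v \<times> nat \<Rightarrow> 'a) set)"
proof -
  define P where "P = {f. (\<exists>b x i. d \<le> i \<and> f = (\<lambda>z::bool \<times> _ \<times> nat \<Rightarrow> 'a. z (b,x,i))) \<or> (\<exists>a b. G a b \<and> f = (\<lambda>z. sqc d z a b))}"
  have "EPc G d = zero_set P"
  proof (intro equalityI subsetI)
    fix z :: "bool \<times> 'v \<times> nat \<Rightarrow> 'a" assume "z \<in> EPc G d" then show "z \<in> zero_set P" unfolding EPc_def P_def zero_set_def by auto
  next
    fix z :: "bool \<times> 'v \<times> nat \<Rightarrow> 'a" assume z: "z \<in> zero_set P"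
    have "z (b,x,i) = 0" if "d \<le> i" for b x i
    proof -
      have "(\<lambda>z. z (b,x,i)) \<in> P" using that by (auto simp: P_def)
      then show ?thesis using z by (auto simp: zero_set_def)
    qed
    moreover have "sqc d z a b = 0" if "G a b" for a b
    proof -
      have "(\<lambda>z. sqc d z a b) \<in> P" using that by (auto simp: P_def)
      then show ?thesis using z by (auto simp: zero_set_def)
    qed
    ultimately show "z \<in> EPc G d" by (auto simp: EPc_def)
  qed
  moreover have "P \<subseteq> polys UNIV" unfolding P_def using sqc_polys by (auto intro: pvar')
  ultimately show ?thesis by (simp add: alg_setI)
qed

lemma ab_one: "c \<noteq> 0 \<Longrightarrow> ((c + inverse c)/2)^2 - ((c - inverse c)/2)^2 = (1::'a::field_char_0)"
  by (simp add: power2_eq_square field_simps)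

lemma Mc_EPc:
  assumes "z \<in> EPc G d" "s \<le> d" "(c::'a::field_char_0) \<noteq> 0"
  shows "Mc s c z \<in> EPc G d"
proof -
  define \<alpha> where "\<alpha> = (c + inverse c)/2"
  define \<beta> where "\<beta> = (c - inverse c)/2"
  have ab: "\<alpha>^2 - \<beta>^2 = 1" using ab_one[OF assms(3)] by (simp add: \<alpha>_def \<beta>_def)
  have z0: "\<forall>b x i. d \<le> i \<longrightarrow> Mc s c z (b,x,i) = 0" using assms(1,2) by (auto simp: EPc_def Mc_def)
  have "sqc d (Mc s c z) a b = sqc d z a b" for a b
  proof -
    have trm: "(Mc s c z (True,a,i) - Mc s c z (True,b,i))^2 - (Mc s c z (False,a,i) - Mc s c z (False,b,i))^2
        = (z (True,a,i) - z (True,b,i))^2 - (z (False,a,i) - z (False,b,i))^2" for i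
    proof (cases "i < s")
      case True
      define P where "P = z (True,a,i) - z (True,b,i)"
      define Q where "Q = z (False,a,i) - z (False,b,i)"
      have "(Mc s c z (True,a,i) - Mc s c z (True,b,i)) = \<alpha> * P + \<beta> * Q"
        using True by (simp add: Mc_def \<alpha>_def \<beta>_def P_def Q_def algebra_simps)
      moreover have "(Mc s c z (False,a,i) - Mc s c z (False,b,i)) = \<beta> * P + \<alpha> * Q"
        using True by (simp add: Mc_def \<alpha>_def \<beta>_def P_def Q_def algebra_simps)
      moreover have "(\<alpha> * P + \<beta> * Q)^2 - (\<beta> * P + \<alpha> * Q)^2 = (\<alpha>^2 - \<beta>^2) * (P^2 - Q^2)"
        by (simp add: power2_eq_square algebra_simps)
      ultimately show ?thesis using ab by (simp add: P_def Q_def)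
    next
      case False then show ?thesis by (simp add: Mc_def)
    qed
    show ?thesis unfolding sqc_def
      using trm by (simp add: sum_subtractf[symmetric])
  qed
  then show ?thesis using assms(1) z0 by (auto simp: EPc_def)
qed

section \<open>Real invariance\<close>

lemma inv_real:
  fixes X T :: "(bool \<times> 'v \<times> nat \<Rightarrow> real) set"
  assumes comp: "irred_component UNIV X T" and algT: "alg_set UNIV T"
    and Tinv: "\<And>c z. c > 0 \<Longrightarrow> z \<in> T \<Longrightarrow> Mc s c z \<in> T"
    and c: "c > 0" and z: "z \<in> X"
  shows "Mc s c z \<in> X"
proof -
  have irrX: "irred_alg UNIV X" and XT: "X \<subseteq> T"
    and mx: "\<And>S'. irred_alg UNIV S' \<Longrightarrow> X \<subseteq> S' \<Longrightarrow> S' \<subseteq> T \<Longrightarrow> S' = X"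
    using comp unfolding irred_component_def by blast+
  have algX: "alg_set UNIV X" and neX: "X \<noteq> {}" using irrX by (auto simp: irred_alg_def)
  define U where "U = {Mc s c' z' | c' z'. c' > (0::real) \<and> z' \<in> X}"
  define W where "W = zar_closure UNIV U"
  have XU: "X \<subseteq> U" unfolding U_def
  proof
    fix x assume "x \<in> X" then show "x \<in> {Mc s c' z' | c' z'. c' > (0::real) \<and> z' \<in> X}"
      using Mc_1[of s x] by (intro CollectI exI[of _ "1::real"] exI[of _ x]) auto
  qed
  have UT: "U \<subseteq> T" unfolding U_def using Tinv XT by auto
  have algW: "alg_set UNIV W" unfolding W_def by (rule zar_closure_alg)
  have UW: "U \<subseteq> W" unfolding W_def by (rule zar_closure_sup)
  have WT: "W \<subseteq> T" unfolding W_def by (rule zar_closure_least[OF algT UT])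
  have irrW: "irred_alg UNIV W"
    unfolding irred_alg_def
  proof (intro conjI allI impI)
    show "alg_set UNIV W" by (rule algW)
    show "W \<noteq> {}" using XU UW neX by blast
    fix A B :: "(bool \<times> 'v \<times> nat \<Rightarrow> real) set"
    assume algA: "alg_set UNIV A" and algB: "alg_set UNIV B" and WAB: "W = A \<union> B"
    define LA where "LA = {c'. c' > (0::real) \<and> (\<forall>z'\<in>X. Mc s c' z' \<in> A)}"
    define LB where "LB = {c'. c' > (0::real) \<and> (\<forall>z'\<in>X. Mc s c' z' \<in> B)}"
    have LAB: "{0<..} \<subseteq> LA \<union> LB"
    proof
      fix c' :: real assume "c' \<in> {0<..}"
      then have c': "c' > 0" by simp
      have "X = (X \<inter> {z'. Mc s c' z' \<in> A}) \<union> (X \<inter> {z'. Mc s c' z' \<in> B})"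
        using c' UW WAB unfolding U_def by blast
      moreover have "alg_set UNIV (X \<inter> {z'. Mc s c' z' \<in> A})" "alg_set UNIV (X \<inter> {z'. Mc s c' z' \<in> B})"
        using alg_set_Int[OF algX alg_set_preimage[OF algA Mc_polys]]
          alg_set_Int[OF algX alg_set_preimage[OF algB Mc_polys]] by auto
      ultimately have "X = X \<inter> {z'. Mc s c' z' \<in> A} \<or> X = X \<inter> {z'. Mc s c' z' \<in> B}"
        using irrX unfolding irred_alg_def by blast
      then show "c' \<in> LA \<union> LB" using c' unfolding LA_def LB_def by blast
    qed
    have inf: "infinite LA \<or> infinite LB"
    proof (rule ccontr)
      assume "\<not> (infinite LA \<or> infinite LB)"
      then have "finite (LA \<union> LB)" by simp
      then have "finite {(0::real)<..}" using LAB finite_subset by blast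
      then show False using infinite_Ioi by blast
    qed
    have gen: "W \<subseteq> A'" if L: "infinite L" "L \<subseteq> {0<..}" "\<forall>c'\<in>L. \<forall>z'\<in>X. Mc s c' z' \<in> A'"
        and algA': "alg_set UNIV A'" for L A'
    proof -
      obtain P where P: "P \<subseteq> polys UNIV" "A' = zero_set P" using algA' by (rule alg_setE)
      have "U \<subseteq> A'"
      proof
        fix u assume "u \<in> U"
        then obtain c' z' where u: "u = Mc s c' z'" "c' > 0" "z' \<in> X" unfolding U_def by blast
        show "u \<in> A'" unfolding P(2) zero_set_iff
        proof
          fix f assume f: "f \<in> P"
          have "\<forall>c\<in>L. f (Mc s c z') = 0" using L(3) u(3) f P(2) by (auto simp: zero_set_iff)
          moreover have "(0::real) \<notin> L" using L(2) by auto
          ultimately have "f (Mc s c' z') = 0"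
            using laurent_vanish[of f UNIV L s z' c'] f P(1) L(1) u(2) by auto
          then show "f u = 0" using u by simp
        qed
      qed
      then show "W \<subseteq> A'" unfolding W_def by (rule zar_closure_least[OF algA'])
    qed
    show "W = A \<or> W = B"
    proof (cases "infinite LA")
      case True
      have "W \<subseteq> A" by (rule gen[OF True _ _ algA]) (auto simp: LA_def)
      then show ?thesis using WAB by blast
    next
      case False
      then have "infinite LB" using inf by blast
      have "W \<subseteq> B" by (rule gen[OF \<open>infinite LB\<close> _ _ algB]) (auto simp: LB_def)
      then show ?thesis using WAB by blast
    qed
  qed
  have "W = X" by (rule mx[OF irrW]) (use XU UW WT in auto)
  moreover have "Mc s c z \<in> U" unfolding U_def using c z by blast
  ultimately show ?thesis using UW by blast
qed


definition ofr :: "('x \<Rightarrow> real) \<Rightarrow> ('x \<Rightarrow> complex)" where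
  "ofr z = (\<lambda>x. complex_of_real (z x))"

lemma Mc_ofr: "Mc s (complex_of_real c) (ofr z) = ofr (Mc s c z)"
  by (rule ext) (auto simp: Mc_def ofr_def of_real_inverse)

lemma inf_pos_reals: "infinite (complex_of_real ` {0<..})"
proof
  assume "finite (complex_of_real ` {0<..})"
  then have "finite {(0::real)<..}" using finite_imageD inj_on_def by (metis of_real_eq_iff)
  then show False using infinite_Ioi by blast
qed

lemma inv_complex:
  fixes X :: "(bool \<times> 'v \<times> nat \<Rightarrow> real) set"
  assumes Xinv: "\<forall>c>0. \<forall>z\<in>X. Mc s c z \<in> X"
    and w: "w \<in> zar_closure UNIV (ofr ` X)"
  shows "Mc s \<i> w \<in> zar_closure UNIV (ofr ` X)"
proof -
  define CE where "CE = zar_closure (UNIV::complex set) (ofr ` X)"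
  have A: "Mc s \<i> (ofr x) \<in> CE" if x: "x \<in> X" for x
    unfolding CE_def zar_closure_def
  proof (intro InterI, clarify)
    fix Z assume algZ: "alg_set (UNIV::complex set) Z" and XZ: "ofr ` X \<subseteq> Z"
    obtain P where P: "P \<subseteq> polys UNIV" "Z = zero_set P" using algZ by (rule alg_setE)
    show "Mc s \<i> (ofr x) \<in> Z" unfolding P(2) zero_set_iff
    proof
      fix f assume f: "f \<in> P"
      have "\<forall>c\<in>complex_of_real ` {0<..}. f (Mc s c (ofr x)) = 0"
      proof
        fix c assume "c \<in> complex_of_real ` {0<..}"
        then obtain r where r: "r > 0" "c = complex_of_real r" by auto
        have "Mc s c (ofr x) = ofr (Mc s r x)" using r Mc_ofr by simp
        moreover have "ofr (Mc s r x) \<in> Z" using Xinv r x XZ by blast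
        ultimately show "f (Mc s c (ofr x)) = 0" using f P(2) by (simp add: zero_set_iff)
      qed
      moreover have L0: "0 \<notin> complex_of_real ` {0<..}" by auto
      moreover have fp: "f \<in> polys UNIV" using f P(1) by blast
      ultimately show "f (Mc s \<i> (ofr x)) = 0"
        using laurent_vanish[OF fp inf_pos_reals L0] by simp
    qed
  qed
  define Z' where "Z' = {w. Mc s \<i> w \<in> CE}"
  have "alg_set UNIV Z'" unfolding Z'_def CE_def
    by (rule alg_set_preimage[OF zar_closure_alg Mc_polys])
  moreover have "ofr ` X \<subseteq> Z'" using A by (auto simp: Z'_def)
  ultimately have "CE \<subseteq> Z'" unfolding CE_def by (rule zar_closure_least)
  then show ?thesis using w by (auto simp: Z'_def CE_def)
qed

definition Qs :: "nat \<Rightarrow> (bool \<times> 'v \<times> nat \<Rightarrow> complex) \<Rightarrow> (bool \<times> 'v \<times> nat \<Rightarrow> complex)" where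
  "Qs s z = (\<lambda>(b,x,i). if i < s then \<i> * z (\<not> b, x, i) else z (b,x,i))"

lemma Mc_ii: "Mc s \<i> z = Qs s z"
  by (rule ext) (auto simp: Mc_def Qs_def)

lemma pog_pc: "pc (pogorelov s e) = Qs s (pc e)"
  by (rule ext) (auto simp: pogorelov_def pc_def Qs_def Let_def field_simps)

lemma Qs4: "Qs s (Qs s (Qs s (Qs s z))) = z"
  by (rule ext) (auto simp: Qs_def)

lemma Qs_polys: "\<i> \<in> K \<Longrightarrow> (\<lambda>z. Qs s z y) \<in> polys K"
proof -
  assume i: "\<i> \<in> K"
  obtain b x j where y: "y = (b,x,j)" by (cases y) auto
  show ?thesis
  proof (cases "j < s")
    case True
    then show ?thesis using polys.pmul[OF polys.pconst[OF i] pvar'[where x="(\<not> b, x, j)" and K=K]]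
      by (simp add: Qs_def y)
  next
    case False
    then show ?thesis using pvar'[where x=y and K=K] by (simp add: Qs_def y)
  qed
qed

lemma pog_bij:
  assumes inv: "\<forall>w\<in>CE. Qs s w \<in> CE" and EC: "EC = {e. pc e \<in> CE}"
  shows "bij_betw (pogorelov s) EC EC"
  unfolding bij_betw_def
proof (intro conjI)
  show "inj_on (pogorelov s) EC"
  proof
    fix e e' assume "pogorelov s e = pogorelov s e'"
    then have "Qs s (pc e) = Qs s (pc e')" using pog_pc by metis
    then have "Qs s (Qs s (Qs s (Qs s (pc e)))) = Qs s (Qs s (Qs s (Qs s (pc e'))))" by simp
    then show "e = e'" using Qs4 pc_inj by metis
  qed
  show "pogorelov s ` EC = EC"
  proof (intro equalityI subsetI)
    fix e' assume "e' \<in> pogorelov s ` EC"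
    then obtain e where "e \<in> EC" "e' = pogorelov s e" by blast
    moreover have "pc (pogorelov s e) = Qs s (pc e)" by (rule pog_pc)
    ultimately show "e' \<in> EC" using inv EC by auto
  next
    fix e assume e: "e \<in> EC"
    define e' where "e' = unpc (Qs s (Qs s (Qs s (pc e))))"
    have "pc e' \<in> CE" using e inv EC by (auto simp: e'_def pc_unpc)
    then have "e' \<in> EC" using EC by simp
    moreover have "pogorelov s e' = e"
      using pog_pc[of s e'] Qs4[of s "pc e"] pc_inj by (metis e'_def pc_unpc)
    ultimately show "e \<in> pogorelov s ` EC" by (metis image_eqI)
  qed
qed


lemma re_im:
  fixes f :: "('x \<Rightarrow> complex) \<Rightarrow> complex"
  assumes "f \<in> polys UNIV"
  shows "\<exists>hr hi. hr \<in> polys UNIV \<and> hi \<in> polys UNIV \<and> (\<forall>z. f (ofr z) = Complex (hr z) (hi z))"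
  using assms
proof induction
  case (pconst c)
  show ?case by (rule exI[of _ "\<lambda>_. Re c"], rule exI[of _ "\<lambda>_. Im c"]) (auto intro: pconstU simp: complex_eq_iff)
next
  case (pvar x)
  show ?case by (rule exI[of _ "\<lambda>z. z x"], rule exI[of _ "\<lambda>_. 0"]) (auto intro: pconstU pvar' simp: complex_eq_iff ofr_def)
next
  case (padd f g)
  obtain a b where 1: "a \<in> polys UNIV" "b \<in> polys UNIV" "\<forall>z. f (ofr z) = Complex (a z) (b z)" using padd.IH(1) by blast
  obtain c d where 2: "c \<in> polys UNIV" "d \<in> polys UNIV" "\<forall>z. g (ofr z) = Complex (c z) (d z)" using padd.IH(2) by blast
  show ?case
    by (rule exI[of _ "\<lambda>z. a z + c z"], rule exI[of _ "\<lambda>z. b z + d z"])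
       (use 1 2 in \<open>auto intro: polys_add simp: complex_eq_iff\<close>)
next
  case (pmul f g)
  obtain a b where 1: "a \<in> polys UNIV" "b \<in> polys UNIV" "\<forall>z. f (ofr z) = Complex (a z) (b z)" using pmul.IH(1) by blast
  obtain c d where 2: "c \<in> polys UNIV" "d \<in> polys UNIV" "\<forall>z. g (ofr z) = Complex (c z) (d z)" using pmul.IH(2) by blast
  show ?case
    by (rule exI[of _ "\<lambda>z. a z * c z - b z * d z"], rule exI[of _ "\<lambda>z. a z * d z + b z * c z"])
       (use 1 2 in \<open>auto intro: polys_add polys_mul polys_diff simp: complex_eq_iff\<close>)
qed

lemma inf_reals: "infinite (range complex_of_real)"
proof
  assume "finite (range complex_of_real)"
  then have "finite (UNIV::real set)" using finite_imageD inj_on_def by (metis of_real_eq_iff)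
  then show False by (simp add: infinite_UNIV_char_0)
qed

lemma ident:
  fixes f :: "('x \<Rightarrow> complex) \<Rightarrow> complex"
  assumes f: "f \<in> polys UNIV" and fV: "finite V" and van: "\<forall>z\<in>FRs V. f (ofr z) = 0"
  shows "\<forall>z. (\<forall>y. y \<notin> V \<longrightarrow> z y = 0) \<longrightarrow> f z = 0"
proof -
  have main: "S \<subseteq> V \<longrightarrow> (\<forall>z. (\<forall>y. y \<notin> V \<longrightarrow> z y = 0) \<and> (\<forall>y. y \<notin> S \<longrightarrow> z y \<in> \<real>) \<longrightarrow> f z = 0)"
    if "finite S" for S
    using that
  proof (induction S rule: finite_induct)
    case empty
    show ?case
    proof (intro impI allI)
      fix z :: "'x \<Rightarrow> complex" assume z: "(\<forall>y. y \<notin> V \<longrightarrow> z y = 0) \<and> (\<forall>y. y \<notin> {} \<longrightarrow> z y \<in> \<real>)"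
      define r where "r = (\<lambda>y. Re (z y))"
      have "ofr r = z" using z by (auto simp: ofr_def r_def fun_eq_iff)
      moreover have "r \<in> FRs V" using z by (auto simp: FRs_def r_def)
      ultimately show "f z = 0" using van by metis
    qed
  next
    case (insert y S)
    show ?case
    proof (intro impI allI)
      assume sub: "insert y S \<subseteq> V"
      fix z :: "'x \<Rightarrow> complex" assume z: "(\<forall>y. y \<notin> V \<longrightarrow> z y = 0) \<and> (\<forall>y'. y' \<notin> insert y S \<longrightarrow> z y' \<in> \<real>)"
      obtain pz where P: "\<forall>z. f z = poly (pz z) (z y)" "\<forall>z t. pz (z(y:=t)) = pz z"
        using univ_decomp[OF f, of y] by blast
      have "\<forall>t\<in>range complex_of_real. poly (pz z) t = 0"
      proof
        fix t assume t: "t \<in> range complex_of_real"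
        have IH: "\<forall>z. (\<forall>y. y \<notin> V \<longrightarrow> z y = 0) \<and> (\<forall>y. y \<notin> S \<longrightarrow> z y \<in> \<real>) \<longrightarrow> f z = 0"
          using insert.IH sub by blast
        have c1: "\<forall>y'. y' \<notin> V \<longrightarrow> (z(y:=t)) y' = 0" using z sub by auto
        have tR: "t \<in> \<real>" using t by (auto simp: Reals_def)
        have c2: "\<forall>y'. y' \<notin> S \<longrightarrow> (z(y:=t)) y' \<in> \<real>" using z tR by auto
        have "f (z(y:=t)) = 0" using IH c1 c2 by blast
        moreover have "f (z(y:=t)) = poly (pz z) t" using P(1)[rule_format, of "z(y:=t)"] P(2) by simp
        ultimately show "poly (pz z) t = 0" by simp
      qed
      then have "pz z = 0" using poly_inf_zero inf_reals by blast
      then show "f z = 0" using P(1) by simp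
    qed
  qed
  show ?thesis using main[OF fV] by auto
qed

lemma denseC:
  fixes R :: "('x \<Rightarrow> real) set" and f :: "('x \<Rightarrow> complex) \<Rightarrow> complex"
  assumes fV: "finite V" and cl: "zar_closure UNIV R = FRs V" and f: "f \<in> polys UNIV"
    and van: "\<forall>z\<in>R. f (ofr z) = 0"
  shows "\<forall>z. (\<forall>y. y \<notin> V \<longrightarrow> z y = 0) \<longrightarrow> f z = 0"
proof (rule ident[OF f fV])
  obtain hr hi where H: "hr \<in> polys UNIV" "hi \<in> polys UNIV" "\<forall>z. f (ofr z) = Complex (hr z) (hi z)"
    using re_im[OF f] by blast
  have "R \<subseteq> {z. hr z = 0}" "R \<subseteq> {z. hi z = 0}" using van H(3) by (auto simp: complex_eq_iff)
  then have "zar_closure UNIV R \<subseteq> {z. hr z = 0}" "zar_closure UNIV R \<subseteq> {z. hi z = 0}"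
    using zar_closure_least alg_set_single H(1,2) by blast+
  then show "\<forall>z\<in>FRs V. f (ofr z) = 0" using cl H(3) by (auto simp: complex_eq_iff)
qed

lemma FRs_alg: "alg_set (UNIV::real set) (FRs V)"
proof -
  have "FRs V = zero_set ((\<lambda>y z. z y) ` (- V))" by (auto simp: FRs_def zero_set_def)
  moreover have "(\<lambda>y z. z y) ` (- V) \<subseteq> polys (UNIV::real set)" by (auto intro: pvar')
  ultimately show ?thesis by (simp add: alg_setI)
qed

lemma closure_full:
  fixes R :: "('x \<Rightarrow> real) set"
  assumes fV: "finite V" and RFR: "R \<subseteq> FRs V"
    and dim: "alg_dim UNIV (zar_closure UNIV R) = card V" and pos: "card V > 0"
  shows "zar_closure UNIV R = FRs V"
proof -
  define Z where "Z = zar_closure UNIV R"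
  have algZ: "alg_set UNIV Z" unfolding Z_def by (rule zar_closure_alg)
  have ZFR: "Z \<subseteq> FRs V" unfolding Z_def by (rule zar_closure_least[OF FRs_alg RFR])
  define S where "S = {n. \<exists>C::nat \<Rightarrow> ('x \<Rightarrow> real) set.
      (\<forall>i\<le>n. irred_alg UNIV (C i)) \<and> (\<forall>i<n. C i \<subset> C (Suc i)) \<and> C n \<subseteq> Z}"
  have Sb: "S \<subseteq> {..card V}"
  proof
    fix n assume "n \<in> S"
    then obtain C where C: "\<forall>i\<le>n. irred_alg UNIV (C i)" "\<forall>i<n. C i \<subset> C (Suc i)" "C n \<subseteq> Z"
      unfolding S_def by blast
    have "C n \<subseteq> FRs V" using C(3) ZFR by blast
    then show "n \<in> {..card V}" using chain_bound[OF fV C(1,2)] by fastforce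
  qed
  then have fS: "finite S" using finite_subset by blast
  have dimS: "Sup S = card V" using dim unfolding alg_dim_def Z_def S_def by simp
  have neS: "S \<noteq> {}"
  proof
    assume "S = {}"
    then have "Sup S = 0" by (simp add: Sup_nat_def)
    then show False using dimS pos by simp
  qed
  have "Sup S = Max S" using neS by (simp add: Sup_nat_def)
  then have "card V \<in> S" using Max_in[OF fS neS] dimS by simp
  then obtain C where C: "\<forall>i\<le>card V. irred_alg UNIV (C i)" "\<forall>i<card V. C i \<subset> C (Suc i)" "C (card V) \<subseteq> Z"
    unfolding S_def by blast
  have "FRs V \<subseteq> Z" by (rule full_dim[OF fV algZ ZFR C refl])
  then show ?thesis using ZFR Z_def by blast
qed


lemma CE_zero:
  fixes X :: "(bool \<times> 'v \<times> nat \<Rightarrow> real) set"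
  assumes "X \<subseteq> EPc G d" "w \<in> zar_closure UNIV (ofr ` X)" "d \<le> i"
  shows "w (b,x,i) = 0"
proof -
  have "ofr ` X \<subseteq> {w. w (b,x,i) = (0::complex)}" using assms(1,3) by (auto simp: EPc_def ofr_def)
  then have "zar_closure UNIV (ofr ` X) \<subseteq> {w. w (b,x,i) = (0::complex)}"
    by (rule zar_closure_least[OF alg_set_single[OF pvar']])
  then show ?thesis using assms(2) by blast
qed

lemma closure_van:
  assumes "f \<in> polys UNIV" "\<forall>w\<in>S. f w = 0" "w \<in> zar_closure UNIV S"
  shows "f w = 0"
proof -
  have "zar_closure UNIV S \<subseteq> {w. f w = 0}"
    using assms(2) by (intro zar_closure_least[OF alg_set_single[OF assms(1)]]) auto
  then show ?thesis using assms(3) by blast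
qed

lemma ofr_pc_fst: "(\<lambda>(x,j). ofr (pc (p,q)) (True,x,j)) = ofr (fc p)"
  by (rule ext) (auto simp: ofr_def pc_def fc_def)

lemma ofr_pc_snd: "(\<lambda>(x,j). ofr (pc (p,q)) (False,x,j)) = ofr (fc q)"
  by (rule ext) (auto simp: ofr_def pc_def fc_def)

lemma proj_polys: "(\<lambda>w. (\<lambda>(x,j). w (b,x,j)) y) \<in> polys K"
  by (cases y) (simp add: pvar')

theorem mainTheorem9:
  fixes G :: "'v::finite \<Rightarrow> 'v \<Rightarrow> bool"
    and d s :: nat
    and E :: "(('v \<Rightarrow> nat \<Rightarrow> real) \<times> ('v \<Rightarrow> nat \<Rightarrow> real)) set"
    and EC :: "(('v \<Rightarrow> nat \<Rightarrow> complex) \<times> ('v \<Rightarrow> nat \<Rightarrow> complex)) set"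
  assumes sym: "\<And>a b. G a b \<Longrightarrow> G b a"
    and irrefl: "\<And>a. \<not> G a a"
    and s_le: "s \<le> d"
    and loc: "gen_loc_rigid G d"
    and not_glob: "\<not> gen_glob_rigid G d"
    and comp: "irred_component (UNIV::real set) (pc ` E) (pc ` Eplus G d)"
    and dim: "set_dim (UNIV::real set) (fc ` fst ` E) = card (UNIV :: 'v set) * d"
    and noncong: "\<exists>(p, q)\<in>E. \<not> congruent d p q"
    and EC_def: "EC = {e. pc e \<in> complexification (pc ` E)}"
  shows "bij_betw (pogorelov s) EC EC \<and>
         (\<forall>e. generic_in EC e \<longrightarrow>
              generic_in EC (pogorelov s e) \<and>
              generic_fw d (fst (pogorelov s e)) \<and>
              generic_fw d (snd (pogorelov s e)))"
proof -
  define X where "X = pc ` E"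
  define CE where "CE = zar_closure (UNIV::complex set) (ofr ` X)"
  have CE_eq: "complexification (pc ` E) = CE"
    unfolding complexification_def CE_def X_def
    by (simp add: ofr_def[abs_def])
  have EC: "EC = {e. pc e \<in> CE}" using EC_def CE_eq by simp
  have comp': "irred_component UNIV X (EPc G d)" using comp pc_Eplus X_def by metis
  have XT: "X \<subseteq> EPc G d" using comp' by (simp add: irred_component_def)
  have EEp: "E \<subseteq> Eplus G d" using XT pc_Eplus pc_inj unfolding X_def by blast
  have dpos: "d > 0"
  proof (rule ccontr)
    assume "\<not> d > 0" then have "d = 0" by simp
    then show False using noncong by (auto simp: congruent_def sqd_def)
  qed
  have Xinv: "\<forall>c>0. \<forall>z\<in>X. Mc s' c z \<in> X" if s': "s' \<le> d" for s'
  proof (intro allI impI ballI)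
    fix c :: real and z assume c: "c > 0" and z: "z \<in> X"
    show "Mc s' c z \<in> X"
    proof (rule inv_real[OF comp' EPc_alg _ c z])
      fix c' :: real and z' :: "bool \<times> 'v \<times> nat \<Rightarrow> real" assume "c' > 0" "z' \<in> EPc G d"
      then show "Mc s' c' z' \<in> EPc G d" using Mc_EPc[OF _ s', of z' G c'] by simp
    qed
  qed
  have CEinv: "\<forall>w\<in>CE. Qs s' w \<in> CE" if s': "s' \<le> d" for s'
  proof
    fix w assume w: "w \<in> CE"
    have "Mc s' \<i> w \<in> CE" using inv_complex[OF Xinv[OF s'], of w] w unfolding CE_def by blast
    then show "Qs s' w \<in> CE" by (simp add: Mc_ii)
  qed
  have bij: "bij_betw (pogorelov s) EC EC" by (rule pog_bij[OF CEinv[OF s_le] EC])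
  have ofrCE: "ofr (pc (p,q)) \<in> CE" if "(p,q) \<in> E" for p q
  proof -
    have "ofr ` X \<subseteq> CE" unfolding CE_def by (rule zar_closure_sup)
    moreover have "ofr (pc (p,q)) \<in> ofr ` X" using that unfolding X_def by blast
    ultimately show ?thesis by blast
  qed
  have EC_unpc: "unpc (ofr (pc (p,q))) \<in> EC" if "(p,q) \<in> E" for p q
    using ofrCE[OF that] by (simp add: EC pc_unpc)
  define V where "V = (UNIV :: 'v set) \<times> {..<d}"
  have fV: "finite V" by (simp add: V_def)
  have cV: "card V = card (UNIV :: 'v set) * d" by (simp add: V_def card_cartesian_product)
  have cpos: "card V > 0" using cV dpos by (simp add: card_gt_0_iff)
  have notV: "y \<notin> V \<longleftrightarrow> d \<le> snd y" for y by (cases y) (auto simp: V_def)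
  have R1FR: "fc ` fst ` E \<subseteq> FRs V"
    using EEp by (auto simp: FRs_def fc_def notV Eplus_def frameworks_def)
  have cl1: "zar_closure UNIV (fc ` fst ` E) = FRs V"
    by (rule closure_full[OF fV R1FR _ cpos]) (use dim cV in \<open>simp add: set_dim_def\<close>)
  have dense1: "\<forall>z. (\<forall>y. y \<notin> V \<longrightarrow> z y = 0) \<longrightarrow> f z = 0"
    if f: "f \<in> polys (UNIV::complex set)" and van: "\<forall>p\<in>fst ` E. f (ofr (fc p)) = 0" for f
    by (rule denseC[OF fV cl1 f]) (use van in auto)
  have dense2: "\<forall>z. (\<forall>y. y \<notin> V \<longrightarrow> z y = 0) \<longrightarrow> f z = 0"
    if f: "f \<in> polys (UNIV::complex set)" and van: "\<forall>q\<in>snd ` E. f (ofr (fc q)) = 0" for f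
  proof -
    define g where "g = (\<lambda>w. f (\<lambda>(x,j). w (False,x,j)))"
    have gP: "g \<in> polys UNIV" unfolding g_def by (rule polys_subst[OF f proj_polys])
    have gX: "\<forall>w\<in>ofr ` X. g w = 0"
      using van unfolding X_def g_def by (auto simp: ofr_pc_snd)
    have gCE: "\<forall>w\<in>CE. g w = 0" using closure_van[OF gP gX] unfolding CE_def by blast
    define f2 where "f2 = (\<lambda>z. f (\<lambda>y. \<i> * z y))"
    have f2P: "f2 \<in> polys UNIV" unfolding f2_def
      by (rule polys_subst[OF f]) (rule polys_smult[OF pvar'])
    have "\<forall>p\<in>fst ` E. f2 (ofr (fc p)) = 0"
    proof
      fix p assume "p \<in> fst ` E"
      then obtain q where pq: "(p,q) \<in> E" by force
      then have fr: "p \<in> frameworks d" "q \<in> frameworks d" using EEp by (auto simp: Eplus_def)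
      have "Qs d (ofr (pc (p,q))) \<in> CE" using CEinv[OF order_refl] ofrCE[OF pq] by blast
      then have "g (Qs d (ofr (pc (p,q)))) = 0" using gCE by blast
      moreover have "(\<lambda>(x,j). Qs d (ofr (pc (p,q))) (False,x,j)) = (\<lambda>y. \<i> * ofr (fc p) y)"
        using fr by (auto simp: Qs_def ofr_def pc_def fc_def frameworks_def fun_eq_iff not_less)
      ultimately show "f2 (ofr (fc p)) = 0" unfolding g_def f2_def by simp
    qed
    then have D: "\<forall>z. (\<forall>y. y \<notin> V \<longrightarrow> z y = 0) \<longrightarrow> f2 z = 0" by (rule dense1[OF f2P])
    show ?thesis
    proof (intro allI impI)
      fix z :: "'v \<times> nat \<Rightarrow> complex" assume z: "\<forall>y. y \<notin> V \<longrightarrow> z y = 0"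
      have "f2 (\<lambda>y. - \<i> * z y) = 0" using D z by auto
      then show "f z = 0" unfolding f2_def by simp
    qed
  qed
  have algK: "\<i> \<in> {x::complex. algebraic x}" by simp
  have QK: "\<rat> \<subseteq> {x::complex. algebraic x}" using rat_imp_algebraic by blast
  have gen: "generic_in EC (pogorelov s e) \<and> generic_fw d (fst (pogorelov s e)) \<and> generic_fw d (snd (pogorelov s e))"
    if ge: "generic_in EC e" for e
  proof -
    define e' where "e' = pogorelov s e"
    have eEC: "e \<in> EC" using ge by (simp add: generic_in_def)
    have e'EC: "e' \<in> EC" using bij eEC unfolding e'_def bij_betw_def by blast
    have pce': "pc e' = Qs s (pc e)" unfolding e'_def by (rule pog_pc)
    have g1: "generic_in EC e'"
      unfolding generic_in_def
    proof (intro conjI ballI impI)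
      show "e' \<in> EC" by (rule e'EC)
      fix f z assume f: "f \<in> polys {x. algebraic x}" and f0: "f (pc e') = 0" and z: "z \<in> EC"
      define g where "g = (\<lambda>w. f (Qs s w))"
      have gP: "g \<in> polys {x. algebraic x}" unfolding g_def by (rule polys_subst[OF f Qs_polys[OF algK]])
      have "g (pc e) = 0" using f0 pce' by (simp add: g_def)
      then have gv: "\<forall>z\<in>EC. g (pc z) = 0" using ge gP by (simp add: generic_in_def)
      obtain z'' where "z'' \<in> EC" "z = pogorelov s z''" using z bij unfolding bij_betw_def by blast
      then show "f (pc z) = 0" using gv pog_pc[of s z''] by (simp add: g_def)
    qed
    have van_gen: "(\<forall>p\<in>fst ` E. f (ofr (fc p)) = 0) \<and> (\<forall>q\<in>snd ` E. f' (ofr (fc q)) = 0)"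
      if f: "f \<in> polys {x. algebraic x}" "f (fc (fst e')) = 0"
        and f': "f' \<in> polys {x. algebraic x}" "f' (fc (snd e')) = 0" for f f'
    proof -
      define g where "g = (\<lambda>w. f (\<lambda>(x,j). w (True,x,j)))"
      define g' where "g' = (\<lambda>w. f' (\<lambda>(x,j). w (False,x,j)))"
      have gP: "g \<in> polys {x. algebraic x}" unfolding g_def by (rule polys_subst[OF f(1) proj_polys])
      have g'P: "g' \<in> polys {x. algebraic x}" unfolding g'_def by (rule polys_subst[OF f'(1) proj_polys])
      have fcT: "(\<lambda>(x,j). pc e' (True,x,j)) = fc (fst e')" by (rule ext) (auto simp: pc_def fc_def)
      have fcF: "(\<lambda>(x,j). pc e' (False,x,j)) = fc (snd e')" by (rule ext) (auto simp: pc_def fc_def)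
      have "g (pc e') = 0" using f(2) fcT by (simp add: g_def)
      then have gv: "\<forall>z\<in>EC. g (pc z) = 0" using g1 gP by (simp add: generic_in_def)
      have "g' (pc e') = 0" using f'(2) fcF by (simp add: g'_def)
      then have g'v: "\<forall>z\<in>EC. g' (pc z) = 0" using g1 g'P by (simp add: generic_in_def)
      show ?thesis
      proof (intro conjI ballI)
        fix p assume "p \<in> fst ` E"
        then obtain q where pq: "(p,q) \<in> E" by force
        have "g (pc (unpc (ofr (pc (p,q))))) = 0" using gv EC_unpc[OF pq] by blast
        then show "f (ofr (fc p)) = 0" by (simp add: pc_unpc g_def ofr_pc_fst)
      next
        fix q assume "q \<in> snd ` E"
        then obtain p where pq: "(p,q) \<in> E" by force
        have "g' (pc (unpc (ofr (pc (p,q))))) = 0" using g'v EC_unpc[OF pq] by blast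
        then show "f' (ofr (fc q)) = 0" by (simp add: pc_unpc g'_def ofr_pc_snd)
      qed
    qed
    have fr: "fst e' \<in> frameworks d" "snd e' \<in> frameworks d"
    proof -
      have "pc e' \<in> CE" using e'EC EC by simp
      then have "pc e' (b,x,i) = 0" if "d \<le> i" for b x i
        using CE_zero[OF XT _ that] unfolding CE_def by blast
      then show "fst e' \<in> frameworks d" "snd e' \<in> frameworks d"
        by (auto simp: frameworks_def pc_def) (metis (full_types))+
    qed
    have fcz: "\<forall>y. y \<notin> V \<longrightarrow> fc q y = 0" if "q \<in> frameworks d" for q :: "'v \<Rightarrow> nat \<Rightarrow> complex"
      using that by (auto simp: notV fc_def frameworks_def)
    have g2: "generic_fw d (fst e')"
      unfolding generic_fw_def
    proof (intro conjI ballI impI)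
      show "fst e' \<in> frameworks d" by (rule fr(1))
      fix f and q :: "'v \<Rightarrow> nat \<Rightarrow> complex" assume f: "f \<in> polys (\<rat>::complex set)" "f (fc (fst e')) = 0" and q: "q \<in> frameworks d"
      have fA: "f \<in> polys {x. algebraic x}" using polys_mono[OF f(1) QK] .
      have z0: "(\<lambda>_. 0) \<in> polys {x::complex. algebraic x}" by (rule polys.pconst) simp
      have "(\<lambda>_. 0::complex) (fc (snd e')) = 0" by simp
      then have "\<forall>p\<in>fst ` E. f (ofr (fc p)) = 0"
        using van_gen[OF fA f(2) z0] by blast
      moreover have fU: "f \<in> polys UNIV" using polys_mono[OF f(1)] by blast
      ultimately show "f (fc q) = 0" using dense1[OF fU] fcz[OF q] by blast
    qed
    have g3: "generic_fw d (snd e')"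
      unfolding generic_fw_def
    proof (intro conjI ballI impI)
      show "snd e' \<in> frameworks d" by (rule fr(2))
      fix f and q :: "'v \<Rightarrow> nat \<Rightarrow> complex" assume f: "f \<in> polys (\<rat>::complex set)" "f (fc (snd e')) = 0" and q: "q \<in> frameworks d"
      have fA: "f \<in> polys {x. algebraic x}" using polys_mono[OF f(1) QK] .
      have z0: "(\<lambda>_. 0) \<in> polys {x::complex. algebraic x}" by (rule polys.pconst) simp
      have "(\<lambda>_. 0::complex) (fc (fst e')) = 0" by simp
      then have "\<forall>q\<in>snd ` E. f (ofr (fc q)) = 0"
        using van_gen[OF z0 _ fA f(2)] by blast
      moreover have fU: "f \<in> polys UNIV" using polys_mono[OF f(1)] by blast
      ultimately show "f (fc q) = 0" using dense2[OF fU] fcz[OF q] by blast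
    qed
    show ?thesis using g1 g2 g3 unfolding e'_def by blast
  qed
  show ?thesis using bij gen by blast
qed

end
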